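(* Suppose $\mathbf t\in\Sigma^\circ$ and let $\mathbf x\in(\Sigma^* )^\circ$ satisfy \[ \mathbf t^T\left(\mathbf x\mathbf x^T-(\nu-1)H(\mathbf x)^{-1}\right)\mathbf t\ \ge\ 0. \] Then $\mathbf x\in\mathcal C(\mathbf t)$, equivalently $\mathbf t\in\mathcal P(\mathbf x)$. In particular, if $\mathbf s=-g(\mathbf x)$ for some $\mathbf x\in(\Sigma^* )^\circ$, then $\mathbf x$ is a dual certificate (i.e. $H(\mathbf x)^{-1}\mathbf t\in\Sigma^*$) for every polynomial $\mathbf t$ satisfying $\|\mathbf t-\mathbf s\|^*_{\mathbf x}\le 1$.
   Context: Fix nonzero real polynomials $g_1,\dots,g_m$ in $n$ variables and nonnegative integers $d_1,\dots,d_m$. Let $\mathcal V$ be the real vector space of polynomials $\sum_{i=1}^m g_i r_i$ with $\deg r_i\le 2d_i$, and $\Sigma\subseteq\mathcal V$ the cone of weighted sums of squares $\sum_i g_i\sigma_i$ with each $\sigma_i$ a sum of squares of polynomials of degree at most $d_i$; assume $\Sigma$ is a proper cone. Fix a basis $\mathbf q=(q_1,\dots,q_U)$ of $\mathcal V$, identify $\mathcal V$ and its dual with $\mathbb R^U$ with the standard inner product and Euclidean norm $\|\cdot\|$; $\Sigma^*$ is the dual cone, $K^\circ$ the interior of $K$. For each $i$ fix a basis $\mathbf p_i$ (of size $L_i$) of polynomials of degree at most $d_i$ and let $\Lambda_i:\mathbb R^U\to\mathbb S^{L_i}$ be the unique linear map with $\sum_u q_u\Lambda_i(\mathbf e_u)=g_i\mathbf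 p_i\mathbf p_i^T$; $\Lambda=\Lambda_1\oplus\cdots\oplus\Lambda_m$ (block diagonal), $\Lambda^*$ its adjoint. Then $(\Sigma^* )^\circ=\{\mathbf x:\Lambda(\mathbf x)\succ0\}$ and $\Sigma^*=\{\mathbf x:\Lambda(\mathbf x)\succeq0\}$. On $(\Sigma^* )^\circ$ let $f(\mathbf x)=-\ln\det\Lambda(\mathbf x)$, with gradient $g(\mathbf x)=-\Lambda^*(\Lambda(\mathbf x)^{-1})$ (not to be confused with the weights $g_i$) and Hessian $H(\mathbf x)\mathbf w=\Lambda^*(\Lambda(\mathbf x)^{-1}\Lambda(\mathbf w)\Lambda(\mathbf x)^{-1})$, positive definite. Let $\nu=\sum_i L_i$. The dual local norm is $\|\mathbf s\|^*_{\mathbf x}=\|H(\mathbf x)^{-1/2}\mathbf s\|$. For $\mathbf s\in\Sigma$, $\mathcal C(\mathbf s)=\{\mathbf x\in(\Sigma^* )^\circ: H(\mathbf x)^{-1}\mathbf s\in\Sigma^*\}$ (the dual certificates of $\mathbf s$), and for $\mathbf x\in(\Sigma^* )^\circ$, $\mathcal P(\mathbf x)=\{\mathbf s\in\Sigma: H(\mathbf x)^{-1}\mathbf s\in\Sigma^*\}$. *)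

theory Defs
  imports "HOL-Analysis.Analysis" "HOL-Library.Poly_Mapping"
begin

text \<open>A real polynomial is a finitely supported map from monomials (finitely supported
  exponent vectors, variable index to exponent) to real coefficients.\<close>
type_synonym rpoly = "(nat \<Rightarrow>\<^sub>0 nat) \<Rightarrow>\<^sub>0 real"

definition pconst :: "real \<Rightarrow> rpoly" where
  "pconst c = Poly_Mapping.single 0 c"

definition in_vars :: "nat \<Rightarrow> rpoly \<Rightarrow> bool" where
  "in_vars n p \<longleftrightarrow> (\<forall>\<alpha>\<in>Poly_Mapping.keys (p::rpoly). \<forall>v\<in>Poly_Mapping.keys \<alpha>. v < n)"

definition total_deg_le :: "nat \<Rightarrow> rpoly \<Rightarrow> bool" where
  "total_deg_le k p \<longleftrightarrow> (\<forall>\<alpha>\<in>Poly_Mapping.keys (p::rpoly). (\<Sum>v\<in>Poly_Mapping.keys \<alpha>. Poly_Mapping.lookup \<alpha> v) \<le> k)"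

definition polys :: "nat \<Rightarrow> nat \<Rightarrow> rpoly set" where
  "polys n k = {p. in_vars n p \<and> total_deg_le k p}"

definition sos :: "nat \<Rightarrow> nat \<Rightarrow> rpoly set" where
  "sos n k = {\<sigma>. \<exists>hs. set hs \<subseteq> polys n k \<and> \<sigma> = sum_list (map (\<lambda>h. h * h) hs)}"

definition Vspace :: "nat \<Rightarrow> nat \<Rightarrow> (nat \<Rightarrow> rpoly) \<Rightarrow> (nat \<Rightarrow> nat) \<Rightarrow> rpoly set" where
  "Vspace n m g d = {\<Sum>i<m. g i * r i | r. \<forall>i<m. r i \<in> polys n (2 * d i)}"

definition WSOS :: "nat \<Rightarrow> nat \<Rightarrow> (nat \<Rightarrow> rpoly) \<Rightarrow> (nat \<Rightarrow> nat) \<Rightarrow> rpoly set" where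
  "WSOS n m g d = {\<Sum>i<m. g i * \<sigma> i | \<sigma>. \<forall>i<m. \<sigma> i \<in> sos n (d i)}"

definition poly_of :: "('U::finite \<Rightarrow> rpoly) \<Rightarrow> real^'U \<Rightarrow> rpoly" where
  "poly_of q c = (\<Sum>u\<in>UNIV. pconst (c $ u) * q u)"

definition coord :: "('U::finite \<Rightarrow> rpoly) \<Rightarrow> rpoly \<Rightarrow> real^'U" where
  "coord q P = (THE c. poly_of q c = P)"

definition is_basis_V :: "nat \<Rightarrow> nat \<Rightarrow> (nat \<Rightarrow> rpoly) \<Rightarrow> (nat \<Rightarrow> nat) \<Rightarrow> ('U::finite \<Rightarrow> rpoly) \<Rightarrow> bool" where
  "is_basis_V n m g d q \<longleftrightarrow>
     (\<forall>u. q u \<in> Vspace n m g d) \<and>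
     (\<forall>c. poly_of q c = 0 \<longrightarrow> c = 0) \<and>
     Vspace n m g d \<subseteq> range (poly_of q)"

definition is_basis_polys :: "nat \<Rightarrow> nat \<Rightarrow> nat \<Rightarrow> (nat \<Rightarrow> rpoly) \<Rightarrow> bool" where
  "is_basis_polys n k L b \<longleftrightarrow>
     (\<forall>j<L. b j \<in> polys n k) \<and>
     (\<forall>c. (\<Sum>j<L. pconst (c j) * b j) = 0 \<longrightarrow> (\<forall>j<L. c j = 0)) \<and>
     polys n k \<subseteq> {\<Sum>j<L. pconst (c j) * b j | c. True}"

definition Sig :: "nat \<Rightarrow> nat \<Rightarrow> (nat \<Rightarrow> rpoly) \<Rightarrow> (nat \<Rightarrow> nat) \<Rightarrow> ('U::finite \<Rightarrow> rpoly) \<Rightarrow> (real^'U) set" where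
  "Sig n m g d q = {c. poly_of q c \<in> WSOS n m g d}"

definition dual_cone :: "(real^'U::finite) set \<Rightarrow> (real^'U) set" where
  "dual_cone K = {x. \<forall>s\<in>K. 0 \<le> x \<bullet> s}"

definition proper_cone :: "(real^'U::finite) set \<Rightarrow> bool" where
  "proper_cone K \<longleftrightarrow> cone K \<and> convex K \<and> closed K \<and> interior K \<noteq> {} \<and> K \<inter> uminus ` K \<subseteq> {0}"

type_synonym bmat = "nat \<times> nat \<Rightarrow> nat \<times> nat \<Rightarrow> real"

definition bidx :: "nat \<Rightarrow> (nat \<Rightarrow> nat) \<Rightarrow> (nat \<times> nat) set" where
  "bidx m L = Sigma {..<m} (\<lambda>i. {..<L i})"

definition Lam :: "nat \<Rightarrow> (nat \<Rightarrow> rpoly) \<Rightarrow> (nat \<Rightarrow> nat) \<Rightarrow> (nat \<Rightarrow> nat \<Rightarrow> rpoly)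
    \<Rightarrow> ('U::finite \<Rightarrow> rpoly) \<Rightarrow> real^'U \<Rightarrow> bmat" where
  "Lam m g L p q x = (\<lambda>(i,j) (i',k).
     if (i,j) \<in> bidx m L \<and> (i',k) \<in> bidx m L \<and> i = i'
     then (\<Sum>u\<in>UNIV. x $ u * coord q (g i * p i j * p i k) $ u) else 0)"

definition bmat_mult :: "(nat \<times> nat) set \<Rightarrow> bmat \<Rightarrow> bmat \<Rightarrow> bmat" where
  "bmat_mult I A B = (\<lambda>a b. \<Sum>c\<in>I. A a c * B c b)"

definition btrace :: "(nat \<times> nat) set \<Rightarrow> bmat \<Rightarrow> real" where
  "btrace I A = (\<Sum>a\<in>I. A a a)"

definition binv :: "(nat \<times> nat) set \<Rightarrow> bmat \<Rightarrow> bmat" where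
  "binv I A = (THE B. (\<forall>a b. (a \<notin> I \<or> b \<notin> I) \<longrightarrow> B a b = 0) \<and>
      (\<forall>a\<in>I. \<forall>b\<in>I. bmat_mult I A B a b = (if a = b then 1 else 0)))"

text \<open>adjoint of Lambda: Lambda^*(Y)_u = < Lambda(e_u), Y > = tr(Lambda(e_u) Y)\<close>
definition Lam_adj :: "nat \<Rightarrow> (nat \<Rightarrow> rpoly) \<Rightarrow> (nat \<Rightarrow> nat) \<Rightarrow> (nat \<Rightarrow> nat \<Rightarrow> rpoly)
    \<Rightarrow> ('U::finite \<Rightarrow> rpoly) \<Rightarrow> bmat \<Rightarrow> real^'U" where
  "Lam_adj m g L p q Y = (\<chi> u. btrace (bidx m L) (bmat_mult (bidx m L) (Lam m g L p q (axis u 1)) Y))"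

definition grad :: "nat \<Rightarrow> (nat \<Rightarrow> rpoly) \<Rightarrow> (nat \<Rightarrow> nat) \<Rightarrow> (nat \<Rightarrow> nat \<Rightarrow> rpoly)
    \<Rightarrow> ('U::finite \<Rightarrow> rpoly) \<Rightarrow> real^'U \<Rightarrow> real^'U" where
  "grad m g L p q x = - Lam_adj m g L p q (binv (bidx m L) (Lam m g L p q x))"

definition Hess :: "nat \<Rightarrow> (nat \<Rightarrow> rpoly) \<Rightarrow> (nat \<Rightarrow> nat) \<Rightarrow> (nat \<Rightarrow> nat \<Rightarrow> rpoly)
    \<Rightarrow> ('U::finite \<Rightarrow> rpoly) \<Rightarrow> real^'U \<Rightarrow> real^'U^'U" where
  "Hess m g L p q x = (\<chi> v u. (Lam_adj m g L p q
      (let I = bidx m L; Li = binv I (Lam m g L p q x)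
       in bmat_mult I (bmat_mult I Li (Lam m g L p q (axis u 1))) Li)) $ v)"

definition psd_sqrt :: "real^'U::finite^'U \<Rightarrow> real^'U^'U" where
  "psd_sqrt A = (THE R. transpose R = R \<and> (\<forall>v. 0 \<le> v \<bullet> (R *v v)) \<and> R ** R = A)"

definition dual_local_norm :: "real^'U::finite^'U \<Rightarrow> real^'U \<Rightarrow> real" where
  "dual_local_norm Hx s = norm (psd_sqrt (matrix_inv Hx) *v s)"

definition Cert :: "(real^'U::finite) set \<Rightarrow> (real^'U \<Rightarrow> real^'U^'U) \<Rightarrow> real^'U \<Rightarrow> (real^'U) set" where
  "Cert K H s = {x \<in> interior (dual_cone K). matrix_inv (H x) *v s \<in> dual_cone K}"

definition Pset :: "(real^'U::finite) set \<Rightarrow> (real^'U \<Rightarrow> real^'U^'U) \<Rightarrow> real^'U \<Rightarrow> (real^'U) set" where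
  "Pset K H x = {s \<in> K. matrix_inv (H x) *v s \<in> dual_cone K}"

definition outer :: "real^'U::finite \<Rightarrow> real^'U^'U" where
  "outer x = (\<chi> i j. x $ i * x $ j)"

definition standing :: "nat \<Rightarrow> nat \<Rightarrow> (nat \<Rightarrow> rpoly) \<Rightarrow> (nat \<Rightarrow> nat) \<Rightarrow> (nat \<Rightarrow> nat)
    \<Rightarrow> (nat \<Rightarrow> nat \<Rightarrow> rpoly) \<Rightarrow> ('U::finite \<Rightarrow> rpoly) \<Rightarrow> bool" where
  "standing n m g d L p q \<longleftrightarrow>
     (\<forall>i<m. g i \<noteq> 0 \<and> in_vars n (g i)) \<and>
     proper_cone (Sig n m g d q) \<and>
     is_basis_V n m g d q \<and>
     (\<forall>i<m. is_basis_polys n (d i) (L i) (p i))"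

end

theory Submission
  imports Defs
begin

definition mm :: "'a set \<Rightarrow> ('a \<Rightarrow> 'a \<Rightarrow> real) \<Rightarrow> ('a \<Rightarrow> 'a \<Rightarrow> real) \<Rightarrow> ('a \<Rightarrow> 'a \<Rightarrow> real)" where
  "mm I A B = (\<lambda>a b. \<Sum>c\<in>I. A a c * B c b)"
definition tp :: "('a \<Rightarrow> 'a \<Rightarrow> real) \<Rightarrow> ('a \<Rightarrow> 'a \<Rightarrow> real)" where
  "tp A = (\<lambda>a b. A b a)"
definition idI :: "'a set \<Rightarrow> ('a \<Rightarrow> 'a \<Rightarrow> real)" where
  "idI I = (\<lambda>a b. if a \<in> I \<and> b = a then 1 else 0)"
definition supp :: "'a set \<Rightarrow> ('a \<Rightarrow> 'a \<Rightarrow> real) \<Rightarrow> bool" where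
  "supp I A \<longleftrightarrow> (\<forall>a b. a \<notin> I \<or> b \<notin> I \<longrightarrow> A a b = 0)"
definition tr :: "'a set \<Rightarrow> ('a \<Rightarrow> 'a \<Rightarrow> real) \<Rightarrow> real" where
  "tr I A = (\<Sum>a\<in>I. A a a)"
definition dg :: "'a set \<Rightarrow> ('a \<Rightarrow> real) \<Rightarrow> ('a \<Rightarrow> 'a \<Rightarrow> real)" where
  "dg I f = (\<lambda>a b. if a \<in> I \<and> b = a then f a else 0)"
definition orth :: "'a set \<Rightarrow> ('a \<Rightarrow> 'a \<Rightarrow> real) \<Rightarrow> bool" where
  "orth I Q \<longleftrightarrow> supp I Q \<and> mm I (tp Q) Q = idI I \<and> mm I Q (tp Q) = idI I"
definition fm :: "'a set \<Rightarrow> ('a \<Rightarrow> 'a \<Rightarrow> real) \<Rightarrow> ('a \<Rightarrow> real) \<Rightarrow> ('a \<Rightarrow> 'a \<Rightarrow> real)" where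
  "fm I Q f = mm I (mm I Q (dg I f)) (tp Q)"
definition qf :: "'a set \<Rightarrow> ('a \<Rightarrow> 'a \<Rightarrow> real) \<Rightarrow> ('a \<Rightarrow> real) \<Rightarrow> real" where
  "qf I A v = (\<Sum>a\<in>I. \<Sum>b\<in>I. v a * A a b * v b)"
definition mv :: "'a set \<Rightarrow> ('a \<Rightarrow> 'a \<Rightarrow> real) \<Rightarrow> ('a \<Rightarrow> real) \<Rightarrow> ('a \<Rightarrow> real)" where
  "mv I A v = (\<lambda>a. \<Sum>b\<in>I. A a b * v b)"


lemma sum_single: "finite I \<Longrightarrow> a \<in> I \<Longrightarrow> (\<And>c. c \<in> I \<Longrightarrow> c \<noteq> a \<Longrightarrow> f c = 0) \<Longrightarrow> sum f I = f a"
  by (subst sum.remove[of I a]) (auto intro!: sum.neutral)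

lemma sum4_swap: "(\<Sum>x\<in>A. \<Sum>y\<in>B. \<Sum>z\<in>C. \<Sum>w\<in>D. F x y z w) = (\<Sum>z\<in>C. \<Sum>w\<in>D. \<Sum>x\<in>A. \<Sum>y\<in>B. F x y z w)"
proof -
  have "(\<Sum>x\<in>A. \<Sum>y\<in>B. \<Sum>z\<in>C. \<Sum>w\<in>D. F x y z w) = (\<Sum>x\<in>A. \<Sum>z\<in>C. \<Sum>y\<in>B. \<Sum>w\<in>D. F x y z w)"
    by (rule sum.cong[OF refl], rule sum.swap)
  also have "\<dots> = (\<Sum>z\<in>C. \<Sum>x\<in>A. \<Sum>y\<in>B. \<Sum>w\<in>D. F x y z w)" by (rule sum.swap)
  also have "\<dots> = (\<Sum>z\<in>C. \<Sum>x\<in>A. \<Sum>w\<in>D. \<Sum>y\<in>B. F x y z w)"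
    by (rule sum.cong[OF refl], rule sum.cong[OF refl], rule sum.swap)
  also have "\<dots> = (\<Sum>z\<in>C. \<Sum>w\<in>D. \<Sum>x\<in>A. \<Sum>y\<in>B. F x y z w)"
    by (rule sum.cong[OF refl], rule sum.swap)
  finally show ?thesis .
qed

lemma mm_assoc: "mm I (mm I A B) C = mm I A (mm I B C)"
proof (intro ext)
  fix a b
  have "mm I (mm I A B) C a b = (\<Sum>c\<in>I. \<Sum>d\<in>I. A a d * B d c * C c b)"
    by (simp add: mm_def sum_distrib_right)
  also have "\<dots> = (\<Sum>d\<in>I. \<Sum>c\<in>I. A a d * B d c * C c b)" by (rule sum.swap)
  also have "\<dots> = mm I A (mm I B C) a b"
    by (simp add: mm_def sum_distrib_left mult.assoc)
  finally show "mm I (mm I A B) C a b = mm I A (mm I B C) a b" .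
qed

lemma tp_mm: "tp (mm I A B) = mm I (tp B) (tp A)"
  unfolding mm_def tp_def fun_eq_iff by (simp add: mult.commute)

lemma tp_tp[simp]: "tp (tp A) = A" by (simp add: tp_def)
lemma tp_idI[simp]: "tp (idI I) = idI I" by (auto simp: tp_def idI_def fun_eq_iff)
lemma tp_dg[simp]: "tp (dg I f) = dg I f" by (auto simp: tp_def dg_def fun_eq_iff)

lemma supp_mm: "supp I A \<Longrightarrow> supp I B \<Longrightarrow> supp I (mm I A B)"
  by (auto simp: supp_def mm_def)
lemma supp_tp: "supp I A \<Longrightarrow> supp I (tp A)"
  by (auto simp: supp_def tp_def)
lemma supp_idI[simp]: "supp I (idI I)" by (auto simp: supp_def idI_def)
lemma supp_dg[simp]: "supp I (dg I f)" by (auto simp: supp_def dg_def)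

lemma mm_idI_left: assumes "finite I" "supp I A" shows "mm I (idI I) A = A"
proof (intro ext)
  fix a b show "mm I (idI I) A a b = A a b"
  proof (cases "a \<in> I")
    case True thus ?thesis unfolding mm_def
      by (subst sum_single[OF assms(1) True]) (auto simp: idI_def)
  next
    case False thus ?thesis using assms(2) by (simp add: mm_def idI_def supp_def)
  qed
qed

lemma mm_idI_right: assumes "finite I" "supp I A" shows "mm I A (idI I) = A"
proof (intro ext)
  fix a b show "mm I A (idI I) a b = A a b"
  proof (cases "b \<in> I")
    case True thus ?thesis unfolding mm_def
      by (subst sum_single[OF assms(1) True]) (auto simp: idI_def)
  next
    case False thus ?thesis using assms(2) by (auto simp: mm_def idI_def supp_def intro!: sum.neutral)
  qed
qed

lemma mm_dg_dg: assumes "finite I" shows "mm I (dg I f) (dg I g) = dg I (\<lambda>k. f k * g k)"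
proof (intro ext)
  fix a b show "mm I (dg I f) (dg I g) a b = dg I (\<lambda>k. f k * g k) a b"
  proof (cases "a \<in> I")
    case True thus ?thesis unfolding mm_def
      by (subst sum_single[OF assms(1) True]) (auto simp: dg_def)
  next
    case False thus ?thesis by (simp add: mm_def dg_def)
  qed
qed

lemma dg_one: "dg I (\<lambda>_. 1) = idI I" by (simp add: dg_def idI_def)

lemma tr_mm_comm: "tr I (mm I A B) = tr I (mm I B A)"
  unfolding tr_def mm_def by (subst sum.swap) (simp add: mult.commute)

lemma orth_mm: assumes "finite I" "orth I Q" "orth I G" shows "orth I (mm I Q G)"
proof -
  have sQ: "supp I Q" and sG: "supp I G" using assms by (auto simp: orth_def)
  have "mm I (tp (mm I Q G)) (mm I Q G) = mm I (tp G) (mm I (mm I (tp Q) Q) G)"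
    by (simp add: tp_mm mm_assoc)
  also have "\<dots> = idI I" using assms sG by (simp add: orth_def mm_idI_left)
  finally have 1: "mm I (tp (mm I Q G)) (mm I Q G) = idI I" .
  have "mm I (mm I Q G) (tp (mm I Q G)) = mm I Q (mm I (mm I G (tp G)) (tp Q))"
    by (simp add: tp_mm mm_assoc)
  also have "\<dots> = idI I" using assms supp_tp[OF sQ] by (simp add: orth_def mm_idI_left)
  finally show ?thesis using 1 supp_mm[OF sQ sG] by (simp add: orth_def)
qed

lemma fm_eq: assumes "finite I" shows "fm I Q f = (\<lambda>a b. \<Sum>k\<in>I. Q a k * f k * Q b k)"
proof (intro ext)
  fix a b
  have "fm I Q f a b = (\<Sum>c\<in>I. (\<Sum>k\<in>I. Q a k * dg I f k c) * Q b c)"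
    by (simp add: fm_def mm_def tp_def)
  also have "\<dots> = (\<Sum>c\<in>I. Q a c * f c * Q b c)"
  proof (rule sum.cong[OF refl])
    fix c assume c: "c \<in> I"
    have "(\<Sum>k\<in>I. Q a k * dg I f k c) = Q a c * f c"
      by (subst sum_single[OF assms c]) (auto simp: dg_def c)
    thus "(\<Sum>k\<in>I. Q a k * dg I f k c) * Q b c = Q a c * f c * Q b c" by simp
  qed
  finally show "fm I Q f a b = (\<Sum>k\<in>I. Q a k * f k * Q b k)" .
qed

lemma supp_fm: "finite I \<Longrightarrow> supp I Q \<Longrightarrow> supp I (fm I Q f)"
  by (auto simp: supp_def fm_eq)

lemma tp_fm: "finite I \<Longrightarrow> tp (fm I Q f) = fm I Q f"
  by (auto simp: tp_def fm_eq fun_eq_iff mult.commute mult.left_commute)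

lemma fm_mult: assumes "finite I" "orth I Q"
  shows "mm I (fm I Q f) (fm I Q g) = fm I Q (\<lambda>k. f k * g k)"
proof -
  have "mm I (fm I Q f) (fm I Q g) = mm I (mm I Q (mm I (dg I f) (mm I (mm I (tp Q) Q) (dg I g)))) (tp Q)"
    unfolding fm_def by (simp add: mm_assoc)
  also have "\<dots> = fm I Q (\<lambda>k. f k * g k)"
    using assms by (simp add: orth_def mm_idI_left mm_dg_dg fm_def)
  finally show ?thesis .
qed

lemma fm_one: assumes "finite I" "orth I Q" shows "fm I Q (\<lambda>_. 1) = idI I"
  using assms by (simp add: fm_def dg_one orth_def mm_idI_right)

lemma tr_fm: assumes "finite I" "orth I Q" shows "tr I (fm I Q f) = (\<Sum>k\<in>I. f k)"
proof -
  have "tr I (fm I Q f) = tr I (mm I (mm I (tp Q) Q) (dg I f))"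
    unfolding fm_def by (metis mm_assoc tr_mm_comm)
  also have "mm I (mm I (tp Q) Q) (dg I f) = dg I f" using assms
    by (simp add: orth_def mm_idI_left)
  also have "tr I (dg I f) = (\<Sum>k\<in>I. f k)" by (simp add: tr_def dg_def)
  finally show ?thesis .
qed

lemma qf_fm: assumes "finite I" shows "qf I (fm I Q f) v = (\<Sum>k\<in>I. f k * (\<Sum>a\<in>I. Q a k * v a)\<^sup>2)"
proof -
  have "qf I (fm I Q f) v = (\<Sum>a\<in>I. \<Sum>b\<in>I. \<Sum>k\<in>I. v a * Q a k * f k * Q b k * v b)"
    by (simp add: qf_def fm_eq[OF assms] sum_distrib_left sum_distrib_right mult.assoc)
  also have "\<dots> = (\<Sum>a\<in>I. \<Sum>k\<in>I. \<Sum>b\<in>I. v a * Q a k * f k * Q b k * v b)"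
    by (rule sum.cong[OF refl], rule sum.swap)
  also have "\<dots> = (\<Sum>k\<in>I. \<Sum>a\<in>I. \<Sum>b\<in>I. v a * Q a k * f k * Q b k * v b)"
    by (rule sum.swap)
  also have "\<dots> = (\<Sum>k\<in>I. f k * (\<Sum>a\<in>I. Q a k * v a)\<^sup>2)"
    by (simp add: power2_eq_square sum_distrib_left sum_distrib_right mult_ac)
  finally show ?thesis .
qed

lemma orth_col: assumes "orth I Q" "j \<in> I" "k \<in> I"
  shows "(\<Sum>a\<in>I. Q a j * Q a k) = (if j = k then 1 else 0)"
  using fun_cong[OF fun_cong[OF conjunct1[OF conjunct2[OF assms(1)[unfolded orth_def]]]], of j k]
    assms(2,3) by (auto simp: mm_def tp_def idI_def)

lemma orth_row: assumes "orth I Q" "j \<in> I" "k \<in> I"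
  shows "(\<Sum>a\<in>I. Q j a * Q k a) = (if j = k then 1 else 0)"
  using fun_cong[OF fun_cong[OF conjunct2[OF conjunct2[OF assms(1)[unfolded orth_def]]]], of j k]
    assms(2,3) by (auto simp: mm_def tp_def idI_def)

lemma qf_col: assumes "finite I" "orth I Q" "k \<in> I"
  shows "qf I (fm I Q f) (\<lambda>a. Q a k) = f k"
proof -
  have "qf I (fm I Q f) (\<lambda>a. Q a k) = (\<Sum>j\<in>I. f j * (if j = k then 1 else 0)\<^sup>2)"
    unfolding qf_fm[OF assms(1)]
    by (rule sum.cong[OF refl]) (simp add: orth_col[OF assms(2) _ assms(3)])
  also have "\<dots> = f k" by (subst sum_single[OF assms(1,3)]) auto
  finally show ?thesis .
qed

lemma qf_congr: assumes "finite I" "tp S = S"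
  shows "qf I (mm I (mm I S M) S) v = qf I M (mv I S v)"
proof -
  have S: "S a b = S b a" for a b using fun_cong[OF fun_cong[OF assms(2)], of a b] by (simp add: tp_def)
  have "qf I (mm I (mm I S M) S) v = (\<Sum>a\<in>I. \<Sum>b\<in>I. \<Sum>c\<in>I. \<Sum>d\<in>I. v a * S a d * M d c * S c b * v b)"
    by (simp add: qf_def mm_def sum_distrib_left sum_distrib_right mult.assoc)
  also have "\<dots> = (\<Sum>c\<in>I. \<Sum>d\<in>I. \<Sum>a\<in>I. \<Sum>b\<in>I. v a * S a d * M d c * S c b * v b)"
    by (rule sum4_swap)
  also have "\<dots> = (\<Sum>d\<in>I. \<Sum>c\<in>I. \<Sum>a\<in>I. \<Sum>b\<in>I. v a * S a d * M d c * S c b * v b)"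
    by (rule sum.swap)
  also have "\<dots> = qf I M (mv I S v)"
    by (simp add: qf_def mv_def sum_distrib_left sum_distrib_right mult_ac S)
  finally show ?thesis .
qed

lemma rot_exists:
  fixes x z b :: real assumes b: "b \<noteq> 0"
  shows "\<exists>c s. c\<^sup>2 + s\<^sup>2 = 1 \<and>
     x\<^sup>2 + z\<^sup>2 < (c\<^sup>2*x - 2 * c * s * b + s\<^sup>2*z)\<^sup>2 + (s\<^sup>2*x + 2 * c * s * b + c\<^sup>2*z)\<^sup>2"
proof -
  define r where "r = sqrt ((z-x)\<^sup>2 + 4*b\<^sup>2)"
  have pos: "(z-x)\<^sup>2 + 4*b\<^sup>2 > 0" using b by (simp add: add_nonneg_pos)
  hence r0: "r > 0" by (simp add: r_def)
  have r2: "r\<^sup>2 = (z-x)\<^sup>2 + 4*b\<^sup>2" using pos by (simp add: r_def)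
  have "((z-x)/r)\<^sup>2 + (2*b/r)\<^sup>2 = ((z-x)\<^sup>2 + 4*b\<^sup>2)/r\<^sup>2"
    by (simp add: power_divide add_divide_distrib power_mult_distrib)
  hence "((z-x)/r)\<^sup>2 + (2*b/r)\<^sup>2 = 1" using r0 r2 pos by simp
  then obtain t where t: "(z-x)/r = cos t" "2*b/r = sin t" by (rule sincos_total_2pi) auto
  define c where "c = cos (t/2)"
  define s where "s = sin (t/2)"
  have cs1: "c\<^sup>2 + s\<^sup>2 = 1" by (simp add: c_def s_def)
  have d1: "c\<^sup>2 - s\<^sup>2 = (z-x)/r" using cos_double[of "t/2"] t by (simp add: c_def s_def)
  have d2: "2 * c * s = 2*b/r" using sin_double[of "t/2"] t by (simp add: c_def s_def mult_ac)
  define np where "np = c\<^sup>2*x - 2 * c * s * b + s\<^sup>2*z"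
  define nq where "nq = s\<^sup>2*x + 2 * c * s * b + c\<^sup>2*z"
  have sum: "np + nq = x + z"
  proof -
    have "np + nq = (c\<^sup>2 + s\<^sup>2) * x + (c\<^sup>2 + s\<^sup>2) * z" by (simp add: np_def nq_def algebra_simps)
    thus ?thesis using cs1 by simp
  qed
  have diff: "nq - np = r"
  proof -
    have "nq - np = (c\<^sup>2 - s\<^sup>2) * (z - x) + 2 * (2 * c * s) * b" by (simp add: np_def nq_def algebra_simps)
    also have "\<dots> = (z-x)/r * (z - x) + 2 * (2*b/r) * b" by (simp only: d1 d2)
    also have "\<dots> = ((z-x)\<^sup>2 + 4*b\<^sup>2) / r" using r0 by (simp add: field_simps power2_eq_square)
    also have "\<dots> = r\<^sup>2 / r" using r2 by simp
    also have "\<dots> = r" using r0 by (simp add: power2_eq_square)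
    finally show ?thesis .
  qed
  have "np\<^sup>2 + nq\<^sup>2 = ((np + nq)\<^sup>2 + (nq - np)\<^sup>2) / 2" by (simp add: power2_eq_square algebra_simps)
  also have "\<dots> = ((x + z)\<^sup>2 + r\<^sup>2) / 2" by (simp add: sum diff)
  also have "\<dots> > ((x + z)\<^sup>2 + (z - x)\<^sup>2) / 2" using r2 b by simp
  also have "((x + z)\<^sup>2 + (z - x)\<^sup>2) / 2 = x\<^sup>2 + z\<^sup>2" by (simp add: power2_eq_square algebra_simps)
  finally show ?thesis using cs1 unfolding np_def nq_def by blast
qed

lemma sum_two: "finite I \<Longrightarrow> p \<in> I \<Longrightarrow> q \<in> I \<Longrightarrow> p \<noteq> q \<Longrightarrow>
   (\<And>k. k \<in> I \<Longrightarrow> k \<noteq> p \<Longrightarrow> k \<noteq> q \<Longrightarrow> f k = 0) \<Longrightarrow> sum f I = f p + f q"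
proof -
  assume a: "finite I" "p \<in> I" "q \<in> I" "p \<noteq> q" "\<And>k. k \<in> I \<Longrightarrow> k \<noteq> p \<Longrightarrow> k \<noteq> q \<Longrightarrow> f k = 0"
  have "sum f I = sum f {p, q}"
    by (rule sum.mono_neutral_right) (use a in auto)
  thus ?thesis using a by simp
qed

lemma sum_split2: fixes f :: "'a \<Rightarrow> real" shows "finite I \<Longrightarrow> p \<in> I \<Longrightarrow> q \<in> I \<Longrightarrow> p \<noteq> q \<Longrightarrow>
   sum f I = f p + f q + sum f (I - {p, q})"
proof -
  assume a: "finite I" "p \<in> I" "q \<in> I" "p \<noteq> q"
  have "sum f I = sum f (I - {p,q}) + sum f {p,q}"
    by (rule sum.subset_diff) (use a in auto)
  moreover have "sum f {p,q} = f p + f q" using a by simp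
  ultimately show ?thesis by linarith
qed

definition rotm :: "'a set \<Rightarrow> 'a \<Rightarrow> 'a \<Rightarrow> real \<Rightarrow> real \<Rightarrow> ('a \<Rightarrow> 'a \<Rightarrow> real)" where
  "rotm I p q c s = (\<lambda>a b. if a \<in> I \<and> b \<in> I then
     (if a = p \<and> b = p then c else if a = q \<and> b = q then c else if a = p \<and> b = q then s
      else if a = q \<and> b = p then - s else if a = b then 1 else 0) else 0)"

lemma rotm_vals:
  assumes "p \<in> I" "q \<in> I" "p \<noteq> q"
  shows "rotm I p q c s p p = c" "rotm I p q c s q q = c" "rotm I p q c s p q = s"
    "rotm I p q c s q p = - s"
  using assms by (simp_all add: rotm_def)

lemma rotm_other:
  assumes "a \<in> I" "b \<in> I" "a \<notin> {p,q} \<or> b \<notin> {p,q}"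
  shows "rotm I p q c s a b = (if a = b then 1 else 0)"
proof -
  have "\<not> (a = p \<and> b = p) \<and> \<not> (a = q \<and> b = q) \<and> \<not> (a = p \<and> b = q) \<and> \<not> (a = q \<and> b = p)"
    using assms(3) by blast
  thus ?thesis using assms(1,2) unfolding rotm_def by (simp only: if_True if_False simp_thms)
qed

lemma rotm_out: "a \<notin> I \<or> b \<notin> I \<Longrightarrow> rotm I p q c s a b = 0"
proof -
  assume "a \<notin> I \<or> b \<notin> I"
  hence h: "(a \<in> I \<and> b \<in> I) = False" by blast
  show ?thesis unfolding rotm_def by (simp only: h if_False)
qed

lemma rotm_orth:
  assumes I: "finite I" "p \<in> I" "q \<in> I" "p \<noteq> q" and cs: "c\<^sup>2 + s\<^sup>2 = 1"
  shows "orth I (rotm I p q c s)"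
proof -
  let ?G = "rotm I p q c s"
  have cs': "c * c + s * s = 1" using cs by (simp add: power2_eq_square)
  have gen: "(\<Sum>k\<in>I. ?G k a * ?G k b) = idI I a b \<and> (\<Sum>k\<in>I. ?G a k * ?G b k) = idI I a b" for a b
  proof (cases "a \<in> I \<and> b \<in> I")
    case False
    have z1: "?G k a * ?G k b = 0" for k
      using False rotm_out[of k I a p q c s] rotm_out[of k I b p q c s] by auto
    have z2: "?G a k * ?G b k = 0" for k
      using False rotm_out[of a I k p q c s] rotm_out[of b I k p q c s] by auto
    have "idI I a b = 0" using False by (auto simp: idI_def)
    thus ?thesis by (simp add: z1 z2)
  next
    case True
    show ?thesis
    proof (cases "a \<in> {p,q}")
      case False
      have 1: "(\<Sum>k\<in>I. ?G k a * ?G k b) = ?G a b"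
        by (subst sum_single[OF I(1), of a]) (use True False in \<open>auto simp: rotm_other\<close>)
      have 2: "(\<Sum>k\<in>I. ?G a k * ?G b k) = ?G b a"
        by (subst sum_single[OF I(1), of a]) (use True False in \<open>auto simp: rotm_other\<close>)
      have 3: "?G a b = idI I a b" "?G b a = idI I a b" using True False by (auto simp: rotm_other idI_def)
      show ?thesis using 1 2 3 by simp
    next
      case aT: True
      show ?thesis
      proof (cases "b \<in> {p,q}")
        case False
        have 1: "(\<Sum>k\<in>I. ?G k a * ?G k b) = ?G b a"
          by (subst sum_single[OF I(1), of b]) (use True False in \<open>auto simp: rotm_other\<close>)
        have 2: "(\<Sum>k\<in>I. ?G a k * ?G b k) = ?G a b"
          by (subst sum_single[OF I(1), of b]) (use True False in \<open>auto simp: rotm_other\<close>)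
        have 3: "?G a b = idI I a b" "?G b a = idI I a b" using True False aT by (auto simp: rotm_other idI_def)
        show ?thesis using 1 2 3 by simp
      next
        case bT: True
        have 1: "(\<Sum>k\<in>I. ?G k a * ?G k b) = ?G p a * ?G p b + ?G q a * ?G q b"
          by (rule sum_two[OF I]) (use True aT bT in \<open>auto simp: rotm_other\<close>)
        have 2: "(\<Sum>k\<in>I. ?G a k * ?G b k) = ?G a p * ?G b p + ?G a q * ?G b q"
          by (rule sum_two[OF I]) (use True aT bT in \<open>auto simp: rotm_other\<close>)
        have "a = p \<or> a = q" "b = p \<or> b = q" using aT bT by auto
        thus ?thesis using 1 2 I cs'
          by (elim disjE) (simp_all add: rotm_vals idI_def mult.commute)
      qed
    qed
  qed
  have m1: "mm I (tp ?G) ?G = idI I"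
  proof (intro ext)
    fix a b show "mm I (tp ?G) ?G a b = idI I a b"
      unfolding mm_def tp_def by (rule conjunct1[OF gen])
  qed
  have m2: "mm I ?G (tp ?G) = idI I"
  proof (intro ext)
    fix a b show "mm I ?G (tp ?G) a b = idI I a b"
      unfolding mm_def tp_def by (rule conjunct2[OF gen])
  qed
  have m3: "supp I ?G" unfolding supp_def by (intro allI impI) (rule rotm_out)
  show ?thesis unfolding orth_def using m1 m2 m3 by (intro conjI)
qed

lemma compact_box_fun:
  fixes K :: "real set"
  assumes "compact K"
  shows "compact {Q :: 'a \<Rightarrow> 'a \<Rightarrow> real. \<forall>a b. Q a b \<in> K}"
proof -
  have c1: "compact {f :: 'a \<Rightarrow> real. \<forall>b. f b \<in> K}"
  proof -
    have "{f :: 'a \<Rightarrow> real. \<forall>b. f b \<in> K} = PiE UNIV (\<lambda>_. K)" by (auto simp: PiE_def Pi_def extensional_def)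
    moreover have "compactin (product_topology (\<lambda>_. euclidean) UNIV) (PiE UNIV (\<lambda>_::'a. K))"
      using assms by (simp add: compactin_PiE)
    ultimately show ?thesis by (simp add: euclidean_product_topology)
  qed
  have "{Q :: 'a \<Rightarrow> 'a \<Rightarrow> real. \<forall>a b. Q a b \<in> K} = PiE UNIV (\<lambda>_. {f :: 'a \<Rightarrow> real. \<forall>b. f b \<in> K})" by (auto simp: PiE_def Pi_def extensional_def)
  moreover have "compactin (product_topology (\<lambda>_. euclidean) UNIV) (PiE UNIV (\<lambda>_::'a. {f :: 'a \<Rightarrow> real. \<forall>b. f b \<in> K}))"
    using c1 by (simp add: compactin_PiE)
  ultimately show ?thesis by (simp add: euclidean_product_topology)
qed

lemma cont_entry: "continuous_on S (\<lambda>Q :: 'a \<Rightarrow> 'a \<Rightarrow> real. Q a b)"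
  by (rule continuous_on_subset[OF continuous_on_product_then_coordinatewise[OF continuous_on_product_coordinates]]) auto

lemma orth_idI: "finite I \<Longrightarrow> orth I (idI I)"
  by (simp add: orth_def mm_idI_left)

lemma compact_orth: assumes "finite I" shows "compact {Q. orth I Q}"
proof -
  have box: "{Q. orth I Q} \<subseteq> {Q. \<forall>a b. Q a b \<in> {-1..1}}"
  proof (clarify)
    fix Q a b assume o: "orth I Q"
    show "Q a b \<in> {-1..1}"
    proof (cases "a \<in> I \<and> b \<in> I")
      case True
      have "(Q a b)\<^sup>2 \<le> (\<Sum>k\<in>I. (Q a k)\<^sup>2)"
        by (rule member_le_sum) (use True assms in auto)
      also have "\<dots> = 1" using orth_row[OF o, of a a] True by (simp add: power2_eq_square)
      finally have "\<bar>Q a b\<bar> \<le> 1" by (simp add: abs_square_le_1)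
      thus ?thesis by auto
    next
      case False thus ?thesis using o by (auto simp: orth_def supp_def)
    qed
  qed
  have eq: "{Q. orth I Q} = {Q. \<forall>a b. (a \<notin> I \<or> b \<notin> I) \<longrightarrow> Q a b = 0} \<inter>
     {Q. \<forall>a b. (\<Sum>c\<in>I. Q c a * Q c b) = idI I a b} \<inter> {Q. \<forall>a b. (\<Sum>c\<in>I. Q a c * Q b c) = idI I a b}"
    by (auto simp: orth_def supp_def mm_def tp_def fun_eq_iff)
  have c1: "closed {Q :: 'a \<Rightarrow> 'a \<Rightarrow> real. \<forall>a b. (a \<notin> I \<or> b \<notin> I) \<longrightarrow> Q a b = 0}"
  proof (intro closed_Collect_all)
    fix a b
    show "closed {Q :: 'a \<Rightarrow> 'a \<Rightarrow> real. (a \<notin> I \<or> b \<notin> I) \<longrightarrow> Q a b = 0}"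
    proof (cases "a \<notin> I \<or> b \<notin> I")
      case True
      thus ?thesis using closed_Collect_eq[OF cont_entry[of UNIV a b] continuous_on_const[of UNIV 0]] by simp
    next
      case False thus ?thesis by simp
    qed
  qed
  have c2: "closed {Q :: 'a \<Rightarrow> 'a \<Rightarrow> real. \<forall>a b. (\<Sum>c\<in>I. Q c a * Q c b) = idI I a b}"
    by (intro closed_Collect_all closed_Collect_eq continuous_intros cont_entry)
  have c3: "closed {Q :: 'a \<Rightarrow> 'a \<Rightarrow> real. \<forall>a b. (\<Sum>c\<in>I. Q a c * Q b c) = idI I a b}"
    by (intro closed_Collect_all closed_Collect_eq continuous_intros cont_entry)
  have cl: "closed {Q. orth I Q}" unfolding eq using c1 c2 c3 by (intro closed_Int)
  have cp: "compact {Q :: 'a \<Rightarrow> 'a \<Rightarrow> real. \<forall>a b. Q a b \<in> {-1..1}}"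
    by (rule compact_box_fun) simp
  have "compact ({Q :: 'a \<Rightarrow> 'a \<Rightarrow> real. \<forall>a b. Q a b \<in> {-1..1}} \<inter> {Q. orth I Q})"
    by (rule compact_Int_closed[OF cp cl])
  moreover have "{Q :: 'a \<Rightarrow> 'a \<Rightarrow> real. \<forall>a b. Q a b \<in> {-1..1}} \<inter> {Q. orth I Q} = {Q. orth I Q}"
    using box by blast
  ultimately show ?thesis by simp
qed

lemma mm3_diag: "mm I (mm I (tp G) B) G i i = (\<Sum>l\<in>I. (\<Sum>k\<in>I. G k i * B k l) * G l i)"
  by (simp add: mm_def tp_def)

lemma jacobi_diag:
  fixes c s :: real
  assumes I: "finite I" "p \<in> I" "q \<in> I" "p \<noteq> q" and B: "tp B = B"
  defines "G \<equiv> rotm I p q c s"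
  shows "\<And>i. i \<in> I \<Longrightarrow> i \<notin> {p,q} \<Longrightarrow> mm I (mm I (tp G) B) G i i = B i i"
    and "mm I (mm I (tp G) B) G p p = c\<^sup>2 * B p p - 2 * c * s * B p q + s\<^sup>2 * B q q"
    and "mm I (mm I (tp G) B) G q q = s\<^sup>2 * B p p + 2 * c * s * B p q + c\<^sup>2 * B q q"
proof -
  have Bs: "B q p = B p q" using fun_cong[OF fun_cong[OF B], of q p] by (simp add: tp_def)
  show "mm I (mm I (tp G) B) G i i = B i i" if i: "i \<in> I" "i \<notin> {p,q}" for i
  proof -
    have inner: "(\<Sum>k\<in>I. G k i * B k l) = B i l" for l
      by (subst sum_single[OF I(1) i(1)]) (use i in \<open>auto simp: G_def rotm_other\<close>)
    show ?thesis unfolding mm3_diag inner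
      by (subst sum_single[OF I(1) i(1)]) (use i in \<open>auto simp: G_def rotm_other\<close>)
  qed
  have innp: "(\<Sum>k\<in>I. G k p * B k l) = c * B p l - s * B q l" for l
    by (subst sum_two[OF I]) (auto simp: G_def rotm_other rotm_vals I)
  have innq: "(\<Sum>k\<in>I. G k q * B k l) = s * B p l + c * B q l" for l
    by (subst sum_two[OF I]) (auto simp: G_def rotm_other rotm_vals I)
  have "mm I (mm I (tp G) B) G p p = (c * B p p - s * B q p) * c + (c * B p q - s * B q q) * (- s)"
    unfolding mm3_diag innp
    by (subst sum_two[OF I]) (auto simp: G_def rotm_other rotm_vals I)
  thus "mm I (mm I (tp G) B) G p p = c\<^sup>2 * B p p - 2 * c * s * B p q + s\<^sup>2 * B q q"
    by (simp add: Bs power2_eq_square algebra_simps)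
  have "mm I (mm I (tp G) B) G q q = (s * B p p + c * B q p) * s + (s * B p q + c * B q q) * c"
    unfolding mm3_diag innq
    by (subst sum_two[OF I]) (auto simp: G_def rotm_other rotm_vals I)
  thus "mm I (mm I (tp G) B) G q q = s\<^sup>2 * B p p + 2 * c * s * B p q + c\<^sup>2 * B q q"
    by (simp add: Bs power2_eq_square algebra_simps)
qed

lemma spectral:
  assumes I: "finite I" and sA: "supp I A" and tA: "tp A = A"
  shows "\<exists>Q f. orth I Q \<and> A = fm I Q f"
proof -
  define Dm where "Dm Q = mm I (mm I (tp Q) A) Q" for Q
  define F where "F Q = (\<Sum>i\<in>I. (Dm Q i i)\<^sup>2)" for Q
  have contF: "continuous_on {Q. orth I Q} F"
    unfolding F_def Dm_def mm_def tp_def by (intro continuous_intros cont_entry)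
  obtain Q0 where Q0: "orth I Q0" and mx: "\<And>Q. orth I Q \<Longrightarrow> F Q \<le> F Q0"
    using continuous_attains_sup[OF compact_orth[OF I] _ contF] orth_idI[OF I] by blast
  define B where "B = Dm Q0"
  have sQ0: "supp I Q0" using Q0 by (simp add: orth_def)
  have sB: "supp I B" unfolding B_def Dm_def by (intro supp_mm supp_tp sA sQ0)
  have tB: "tp B = B" unfolding B_def Dm_def by (simp add: tp_mm tA mm_assoc)
  have off: "B p q = 0" if pq: "p \<in> I" "q \<in> I" "p \<noteq> q" for p q
  proof (rule ccontr)
    assume nz: "B p q \<noteq> 0"
    obtain c s where cs: "c\<^sup>2 + s\<^sup>2 = 1" and
      gt: "(B p p)\<^sup>2 + (B q q)\<^sup>2 < (c\<^sup>2 * B p p - 2 * c * s * B p q + s\<^sup>2 * B q q)\<^sup>2 +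
                (s\<^sup>2 * B p p + 2 * c * s * B p q + c\<^sup>2 * B q q)\<^sup>2"
      using rot_exists[OF nz, of "B p p" "B q q"] by blast
    define G where "G = rotm I p q c s"
    have oG: "orth I G" unfolding G_def by (rule rotm_orth[OF I pq cs])
    define Q1 where "Q1 = mm I Q0 G"
    have oQ1: "orth I Q1" unfolding Q1_def by (rule orth_mm[OF I Q0 oG])
    have DQ1: "Dm Q1 = mm I (mm I (tp G) B) G"
      unfolding Q1_def B_def Dm_def by (simp add: tp_mm mm_assoc)
    note jd = jacobi_diag[OF I pq tB, where c = c and s = s, folded G_def]
    have "F Q1 = (Dm Q1 p p)\<^sup>2 + (Dm Q1 q q)\<^sup>2 + (\<Sum>i\<in>I - {p,q}. (Dm Q1 i i)\<^sup>2)"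
      unfolding F_def by (rule sum_split2[OF I pq])
    also have "(\<Sum>i\<in>I - {p,q}. (Dm Q1 i i)\<^sup>2) = (\<Sum>i\<in>I - {p,q}. (B i i)\<^sup>2)"
      by (rule sum.cong[OF refl]) (simp add: DQ1 jd(1))
    also have "(Dm Q1 p p)\<^sup>2 + (Dm Q1 q q)\<^sup>2 > (B p p)\<^sup>2 + (B q q)\<^sup>2"
      using gt by (simp add: DQ1 jd(2,3))
    hence "(Dm Q1 p p)\<^sup>2 + (Dm Q1 q q)\<^sup>2 + (\<Sum>i\<in>I - {p,q}. (B i i)\<^sup>2) >
           (B p p)\<^sup>2 + (B q q)\<^sup>2 + (\<Sum>i\<in>I - {p,q}. (B i i)\<^sup>2)" by simp
    also have "(B p p)\<^sup>2 + (B q q)\<^sup>2 + (\<Sum>i\<in>I - {p,q}. (B i i)\<^sup>2) = F Q0"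
      unfolding F_def B_def by (rule sum_split2[OF I pq, symmetric])
    finally have "F Q0 < F Q1" .
    thus False using mx[OF oQ1] by simp
  qed
  have Bdg: "B = dg I (\<lambda>k. B k k)"
  proof (intro ext)
    fix a b show "B a b = dg I (\<lambda>k. B k k) a b"
      using sB off by (cases "a \<in> I \<and> b \<in> I") (auto simp: dg_def supp_def)
  qed
  have "mm I (mm I Q0 B) (tp Q0) = mm I (mm I (mm I Q0 (tp Q0)) A) (mm I Q0 (tp Q0))"
    unfolding B_def Dm_def by (simp add: mm_assoc)
  also have "\<dots> = A" using Q0 I sA by (simp add: orth_def mm_idI_left mm_idI_right)
  finally have "A = fm I Q0 (\<lambda>k. B k k)" unfolding fm_def using Bdg by simp
  thus ?thesis using Q0 by blast
qed

lemma scalar_nonneg: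
  fixes mu :: "'a \<Rightarrow> real"
  assumes K: "finite K" and hyp: "(real (card K) - 1) * (\<Sum>k\<in>K. (mu k)\<^sup>2) \<le> (\<Sum>k\<in>K. mu k)\<^sup>2"
    and pos: "(\<Sum>k\<in>K. mu k) > 0" and j: "j \<in> K"
  shows "mu j \<ge> 0"
proof (rule ccontr)
  assume "\<not> mu j \<ge> 0" hence neg: "mu j < 0" by simp
  define K' where "K' = K - {j}"
  define S where "S = (\<Sum>k\<in>K'. mu k)"
  define T where "T = (\<Sum>k\<in>K'. (mu k)\<^sup>2)"
  have fK': "finite K'" using K by (simp add: K'_def)
  have c1: "card K' = card K - 1" using K j by (simp add: K'_def card_Diff_singleton)
  have c2: "card K \<ge> 1" using K j card_gt_0_iff[of K] by auto
  have cK: "real (card K) - 1 = real (card K')" using c1 c2 by (simp add: of_nat_diff)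
  have s1: "(\<Sum>k\<in>K. mu k) = mu j + S" unfolding S_def K'_def using K j by (simp add: sum.remove)
  have s2: "(\<Sum>k\<in>K. (mu k)\<^sup>2) = (mu j)\<^sup>2 + T" unfolding T_def K'_def using K j by (simp add: sum.remove)
  have cs: "S\<^sup>2 \<le> T * real (card K')" unfolding S_def T_def by (rule sum_squared_le_sum_of_squares)
  have Spos: "S > 0" using pos neg s1 by simp
  have T0: "T \<ge> 0" unfolding T_def by (simp add: sum_nonneg)
  have h: "real (card K') * ((mu j)\<^sup>2 + T) \<le> (mu j + S)\<^sup>2" using hyp cK s1 s2 by simp
  have "real (card K') * (mu j)\<^sup>2 + S\<^sup>2 \<le> (mu j + S)\<^sup>2"
    using h cs by (simp add: algebra_simps)
  hence "real (card K') * (mu j)\<^sup>2 \<le> (mu j)\<^sup>2 + 2 * mu j * S" by (simp add: power2_eq_square algebra_simps)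
  moreover have "mu j * S < 0" using neg Spos by (simp add: mult_neg_pos)
  ultimately have "real (card K') * (mu j)\<^sup>2 < 1 * (mu j)\<^sup>2" by simp
  hence "real (card K') < 1" using neg by (subst (asm) mult_less_cancel_right) auto
  hence "card K' = 0" by simp
  hence "K' = {}" using fK' by simp
  thus False using Spos by (simp add: S_def)
qed

definition psd :: "'a set \<Rightarrow> ('a \<Rightarrow> 'a \<Rightarrow> real) \<Rightarrow> bool" where
  "psd I A \<longleftrightarrow> (\<forall>v. qf I A v \<ge> 0)"
definition pd :: "'a set \<Rightarrow> ('a \<Rightarrow> 'a \<Rightarrow> real) \<Rightarrow> bool" where
  "pd I A \<longleftrightarrow> (\<forall>v. (\<exists>a\<in>I. v a \<noteq> 0) \<longrightarrow> qf I A v > 0)"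

lemma fm_cong: "finite I \<Longrightarrow> (\<And>k. k \<in> I \<Longrightarrow> f k = g k) \<Longrightarrow> fm I Q f = fm I Q g"
  by (simp add: fm_eq)

lemma orth_col_nz: assumes "orth I Q" "k \<in> I" shows "\<exists>a\<in>I. Q a k \<noteq> 0"
proof (rule ccontr)
  assume "\<not> ?thesis"
  hence "(\<Sum>a\<in>I. Q a k * Q a k) = 0" by simp
  thus False using orth_col[OF assms(1) assms(2) assms(2)] by simp
qed

lemma pd_factor:
  assumes I: "finite I" and s: "supp I X" and t: "tp X = X" and p: "pd I X"
  shows "\<exists>Q f. orth I Q \<and> (\<forall>k\<in>I. f k > 0) \<and> X = fm I Q f"
proof -
  obtain Q f where Q: "orth I Q" and X: "X = fm I Q f" using spectral[OF I s t] by blast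
  have "f k > 0" if k: "k \<in> I" for k
  proof -
    have "qf I X (\<lambda>a. Q a k) > 0" using p orth_col_nz[OF Q k] by (simp add: pd_def)
    thus ?thesis using qf_col[OF I Q k] X by simp
  qed
  thus ?thesis using Q X by blast
qed

lemma fm_zero: "finite I \<Longrightarrow> fm I Q (\<lambda>_. 0) = (\<lambda>_ _. 0)"
  by (simp add: fm_eq fun_eq_iff)

context
  fixes I :: "'a set" and Q :: "'a \<Rightarrow> 'a \<Rightarrow> real" and f :: "'a \<Rightarrow> real"
  assumes I: "finite I" and Q: "orth I Q" and fpos: "\<forall>k\<in>I. f k > 0"
begin

definition "Xm = fm I Q f"
definition "Bm = fm I Q (\<lambda>k. 1 / f k)"
definition "Rm = fm I Q (\<lambda>k. 1 / sqrt (f k))"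
definition "Sm = fm I Q (\<lambda>k. sqrt (f k))"

lemma sQ: "supp I Q" using Q by (simp add: orth_def)

lemma fm_mult': "(\<And>k. k \<in> I \<Longrightarrow> h k = g1 k * g2 k) \<Longrightarrow> mm I (fm I Q g1) (fm I Q g2) = fm I Q h"
proof -
  assume h: "\<And>k. k \<in> I \<Longrightarrow> h k = g1 k * g2 k"
  have "fm I Q h = fm I Q (\<lambda>k. g1 k * g2 k)" by (rule fm_cong[OF I]) (simp add: h)
  thus ?thesis using fm_mult[OF I Q] by simp
qed

lemma sq_self: "k \<in> I \<Longrightarrow> sqrt (f k) * sqrt (f k) = f k"
proof -
  assume "k \<in> I" hence "f k > 0" using fpos by blast
  thus ?thesis by simp
qed

lemma RR: "mm I Rm Rm = Bm" unfolding Rm_def Bm_def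
proof (rule fm_mult')
  fix k assume k: "k \<in> I"
  show "1 / f k = 1 / sqrt (f k) * (1 / sqrt (f k))" using sq_self[OF k] by (simp add: divide_simps)
qed
lemma SR: "mm I Sm Rm = idI I" unfolding Sm_def Rm_def fm_one[OF I Q, symmetric]
  by (rule fm_mult') (use fpos in \<open>auto simp: divide_simps\<close>)
lemma RS: "mm I Rm Sm = idI I" unfolding Sm_def Rm_def fm_one[OF I Q, symmetric]
  by (rule fm_mult') (use fpos in \<open>auto simp: divide_simps\<close>)
lemma SS: "mm I Sm Sm = Xm" unfolding Sm_def Xm_def
  by (rule fm_mult') (use sq_self in auto)
lemma XB: "mm I Xm Bm = idI I" unfolding Xm_def Bm_def fm_one[OF I Q, symmetric]
  by (rule fm_mult') (use fpos in \<open>auto simp: divide_simps\<close>)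
lemma BX: "mm I Bm Xm = idI I" unfolding Xm_def Bm_def fm_one[OF I Q, symmetric]
  by (rule fm_mult') (use fpos in \<open>auto simp: divide_simps\<close>)

lemma tpR: "tp Rm = Rm" unfolding Rm_def by (rule tp_fm[OF I])
lemma tpS: "tp Sm = Sm" unfolding Sm_def by (rule tp_fm[OF I])
lemma tpB: "tp Bm = Bm" unfolding Bm_def by (rule tp_fm[OF I])
lemma supR: "supp I Rm" unfolding Rm_def by (rule supp_fm[OF I sQ])
lemma supS: "supp I Sm" unfolding Sm_def by (rule supp_fm[OF I sQ])
lemma supB: "supp I Bm" unfolding Bm_def by (rule supp_fm[OF I sQ])

lemma congr_back: "supp I Y \<Longrightarrow> mm I (mm I Sm (mm I (mm I Rm Y) Rm)) Sm = Y"
proof -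
  assume sY: "supp I Y"
  have "mm I (mm I Sm (mm I (mm I Rm Y) Rm)) Sm = mm I (mm I (mm I Sm Rm) Y) (mm I Rm Sm)"
    by (simp add: mm_assoc)
  also have "\<dots> = Y" using sY by (simp add: SR RS mm_idI_left[OF I] mm_idI_right[OF I])
  finally show ?thesis .
qed

lemma tr1: "tr I (mm I Bm Y) = tr I (mm I (mm I Rm Y) Rm)"
  by (metis RR mm_assoc tr_mm_comm)

lemma tr2: "tr I (mm I (mm I Bm Y) (mm I Bm Y)) = tr I (mm I (mm I (mm I Rm Y) Rm) (mm I (mm I Rm Y) Rm))"
proof -
  have "tr I (mm I (mm I Bm Y) (mm I Bm Y)) = tr I (mm I Rm (mm I Rm (mm I Y (mm I Rm (mm I Rm Y)))))"
    by (simp add: RR[symmetric] mm_assoc)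
  also have "\<dots> = tr I (mm I (mm I Rm (mm I Y (mm I Rm (mm I Rm Y)))) Rm)" by (rule tr_mm_comm)
  also have "\<dots> = tr I (mm I (mm I (mm I Rm Y) Rm) (mm I (mm I Rm Y) Rm))" by (simp add: mm_assoc)
  finally show ?thesis .
qed

lemma Z_props: "supp I Y \<Longrightarrow> tp Y = Y \<Longrightarrow> supp I (mm I (mm I Rm Y) Rm) \<and> tp (mm I (mm I Rm Y) Rm) = mm I (mm I Rm Y) Rm"
  by (simp add: supp_mm supR tp_mm tpR mm_assoc)

lemma core1:
  assumes sY: "supp I Y" and tY: "tp Y = Y"
    and pos: "tr I (mm I Bm Y) > 0"
    and hyp: "(real (card I) - 1) * tr I (mm I (mm I Bm Y) (mm I Bm Y)) \<le> (tr I (mm I Bm Y))\<^sup>2"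
  shows "psd I Y"
proof -
  define Z where "Z = mm I (mm I Rm Y) Rm"
  have sZ: "supp I Z" and tZ: "tp Z = Z" using Z_props[OF sY tY] by (simp_all add: Z_def)
  obtain P mu where P: "orth I P" and Zf: "Z = fm I P mu" using spectral[OF I sZ tZ] by blast
  have t1: "tr I (mm I Bm Y) = (\<Sum>k\<in>I. mu k)" using tr1 tr_fm[OF I P] Zf Z_def by simp
  have t2: "tr I (mm I (mm I Bm Y) (mm I Bm Y)) = (\<Sum>k\<in>I. (mu k)\<^sup>2)"
    using tr2 fm_mult[OF I P] tr_fm[OF I P] Zf Z_def by (simp add: power2_eq_square)
  have mu: "mu k \<ge> 0" if "k \<in> I" for k
    by (rule scalar_nonneg[OF I _ _ that]) (use hyp pos t1 t2 in auto)
  show ?thesis unfolding psd_def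
  proof
    fix v
    have "qf I Y v = qf I Z (mv I Sm v)"
      using congr_back[OF sY] qf_congr[OF I tpS, of Z v] by (simp add: Z_def)
    also have "\<dots> \<ge> 0" unfolding Zf qf_fm[OF I] by (intro sum_nonneg mult_nonneg_nonneg mu) auto
    finally show "qf I Y v \<ge> 0" .
  qed
qed

lemma qf_add: "qf I (\<lambda>a b. A a b + C a b) v = qf I A v + qf I C v"
  by (simp add: qf_def algebra_simps sum.distrib)

lemma core2:
  assumes sW: "supp I W" and tW: "tp W = W"
    and hyp: "tr I (mm I (mm I Bm W) (mm I Bm W)) \<le> 1"
  shows "psd I (\<lambda>a b. Xm a b + W a b)"
proof -
  define Z where "Z = mm I (mm I Rm W) Rm"
  have sZ: "supp I Z" and tZ: "tp Z = Z" using Z_props[OF sW tW] by (simp_all add: Z_def)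
  obtain P mu where P: "orth I P" and Zf: "Z = fm I P mu" using spectral[OF I sZ tZ] by blast
  have t2: "(\<Sum>k\<in>I. (mu k)\<^sup>2) \<le> 1"
    using hyp tr2 fm_mult[OF I P] tr_fm[OF I P] Zf Z_def by (simp add: power2_eq_square)
  have mu: "1 + mu k \<ge> 0" if k: "k \<in> I" for k
  proof -
    have "(mu k)\<^sup>2 \<le> (\<Sum>k\<in>I. (mu k)\<^sup>2)" by (rule member_le_sum) (use k I in auto)
    hence "(mu k)\<^sup>2 \<le> 1" using t2 by simp
    hence "\<bar>mu k\<bar> \<le> 1" by (simp add: abs_square_le_1)
    thus ?thesis by simp
  qed
  show ?thesis unfolding psd_def
  proof
    fix v
    define u where "u = mv I Sm v"
    have "qf I W v = qf I Z u"
      using congr_back[OF sW] qf_congr[OF I tpS, of Z v] by (simp add: Z_def u_def)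
    moreover have "qf I Xm v = qf I (fm I P (\<lambda>_. 1)) u"
    proof -
      have "Xm = mm I (mm I Sm (idI I)) Sm" using SS mm_idI_right[OF I supS] by simp
      thus ?thesis using qf_congr[OF I tpS, of "idI I" v] fm_one[OF I P] by (simp add: u_def)
    qed
    ultimately have "qf I (\<lambda>a b. Xm a b + W a b) v = (\<Sum>k\<in>I. (1 + mu k) * (\<Sum>a\<in>I. P a k * u a)\<^sup>2)"
      by (simp add: qf_add qf_fm[OF I] Zf algebra_simps sum.distrib)
    also have "\<dots> \<ge> 0" by (intro sum_nonneg mult_nonneg_nonneg mu) auto
    finally show "qf I (\<lambda>a b. Xm a b + W a b) v \<ge> 0" .
  qed
qed

lemma core3:
  assumes sY: "supp I Y" and tY: "tp Y = Y"
  shows "tr I (mm I (mm I Bm Y) (mm I Bm Y)) \<ge> 0"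
    and "tr I (mm I (mm I Bm Y) (mm I Bm Y)) = 0 \<Longrightarrow> Y = (\<lambda>_ _. 0)"
proof -
  define Z where "Z = mm I (mm I Rm Y) Rm"
  have sZ: "supp I Z" and tZ: "tp Z = Z" using Z_props[OF sY tY] by (simp_all add: Z_def)
  obtain P mu where P: "orth I P" and Zf: "Z = fm I P mu" using spectral[OF I sZ tZ] by blast
  have t2: "tr I (mm I (mm I Bm Y) (mm I Bm Y)) = (\<Sum>k\<in>I. (mu k)\<^sup>2)"
    using tr2 fm_mult[OF I P] tr_fm[OF I P] Zf Z_def by (simp add: power2_eq_square)
  show "tr I (mm I (mm I Bm Y) (mm I Bm Y)) \<ge> 0" unfolding t2 by (simp add: sum_nonneg)
  assume "tr I (mm I (mm I Bm Y) (mm I Bm Y)) = 0"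
  hence "\<forall>k\<in>I. (mu k)\<^sup>2 = 0" unfolding t2 using sum_nonneg_eq_0_iff[OF I, of "\<lambda>k. (mu k)\<^sup>2"] by simp
  hence "fm I P mu = fm I P (\<lambda>_. 0)" by (intro fm_cong[OF I]) simp
  hence "Z = fm I P (\<lambda>_. 0)" using Zf by simp
  hence Z0: "Z = (\<lambda>_ _. 0)" using fm_zero[OF I] by simp
  have "Y = mm I (mm I Sm Z) Sm" using congr_back[OF sY] by (simp add: Z_def mm_assoc)
  thus "Y = (\<lambda>_ _. 0)" by (simp add: Z0 mm_def)
qed

end

lemma pconst_mult: "pconst a * pconst b = pconst (a * b)"
  by (simp add: pconst_def mult_single)
lemma pconst_add: "pconst (a + b) = pconst a + pconst b"
  by (simp add: pconst_def single_add)
lemma pconst_diff: "pconst (a - b) = pconst a - pconst b"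
  by (simp add: pconst_def single_diff)
lemma pconst_0[simp]: "pconst 0 = 0" by (simp add: pconst_def)
lemma pconst_1[simp]: "pconst 1 = 1" by (simp add: pconst_def)

lemma poly_of_add: "poly_of q (c + d) = poly_of q c + poly_of q d"
  by (simp add: poly_of_def pconst_add distrib_right sum.distrib)
lemma poly_of_diff: "poly_of q (c - d) = poly_of q c - poly_of q d"
  by (simp add: poly_of_def pconst_diff left_diff_distrib sum_subtractf)
lemma poly_of_zero[simp]: "poly_of q 0 = 0"
  by (simp add: poly_of_def)
lemma poly_of_scale: "poly_of q (a *\<^sub>R c) = pconst a * poly_of q c"
  by (simp add: poly_of_def sum_distrib_left pconst_mult[symmetric] mult.assoc)
lemma poly_of_sum: "poly_of q (\<Sum>x\<in>S. f x) = (\<Sum>x\<in>S. poly_of q (f x))"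
  by (induction S rule: infinite_finite_induct) (simp_all add: poly_of_add)
lemma poly_of_sum_list: "poly_of q (sum_list (map f xs)) = sum_list (map (\<lambda>x. poly_of q (f x)) xs)"
  by (induction xs) (simp_all add: poly_of_add)

lemma inner_sum_list_right: "(y::'b::real_inner) \<bullet> sum_list (map f xs) = sum_list (map (\<lambda>x. y \<bullet> f x) xs)"
  by (induction xs) (simp_all add: inner_add_right)

lemma poly_of_inj:
  assumes "is_basis_V n m g d q" "poly_of q c = poly_of q c'"
  shows "c = c'"
proof -
  have "poly_of q (c - c') = 0" using assms(2) by (simp add: poly_of_diff)
  hence "c - c' = 0" using assms(1) unfolding is_basis_V_def by blast
  thus ?thesis by simp
qed

lemma coord_eq:
  assumes "is_basis_V n m g d q" "P \<in> Vspace n m g d"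
  shows "poly_of q (coord q P) = P"
proof -
  obtain c where c: "poly_of q c = P" using assms unfolding is_basis_V_def by blast
  have "poly_of q (THE c. poly_of q c = P) = P"
    by (rule theI[of "\<lambda>c. poly_of q c = P" c]) (use c poly_of_inj[OF assms(1)] in auto)
  thus ?thesis by (simp add: coord_def)
qed

lemma deg_add: "(\<Sum>v\<in>Poly_Mapping.keys (a + b). Poly_Mapping.lookup (a + b) v) =
   (\<Sum>v\<in>Poly_Mapping.keys a. Poly_Mapping.lookup a v) + (\<Sum>v\<in>Poly_Mapping.keys b. Poly_Mapping.lookup b v)"
  for a b :: "nat \<Rightarrow>\<^sub>0 nat"
  by (rule setsum_keys_plus_distrib[where f = "\<lambda>k x. x"]) auto

lemma polys_mult:
  assumes h1: "h1 \<in> polys n k1" and h2: "h2 \<in> polys n k2" shows "h1 * h2 \<in> polys n (k1 + k2)"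
proof -
  have key: "\<exists>a b. \<alpha> = a + b \<and> a \<in> Poly_Mapping.keys h1 \<and> b \<in> Poly_Mapping.keys h2"
    if "\<alpha> \<in> Poly_Mapping.keys (h1 * h2)" for \<alpha>
  proof -
    have "\<alpha> \<in> {a + b | a b. a \<in> Poly_Mapping.keys h1 \<and> b \<in> Poly_Mapping.keys h2}"
      using keys_mult[of h1 h2] that by (rule subsetD)
    thus ?thesis by (simp only: mem_Collect_eq)
  qed
  have iv: "in_vars n (h1 * h2)" unfolding in_vars_def
  proof (intro ballI)
    fix \<alpha> v assume \<alpha>: "\<alpha> \<in> Poly_Mapping.keys (h1 * h2)" and v: "v \<in> Poly_Mapping.keys \<alpha>"
    obtain a b where ab: "\<alpha> = a + b" "a \<in> Poly_Mapping.keys h1" "b \<in> Poly_Mapping.keys h2"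
      using key[OF \<alpha>] by blast
    have "v \<in> Poly_Mapping.keys a \<union> Poly_Mapping.keys b" using keys_add[of a b] v ab(1) by blast
    thus "v < n" using h1 h2 ab(2,3) unfolding polys_def in_vars_def by blast
  qed
  have td: "total_deg_le (k1 + k2) (h1 * h2)" unfolding total_deg_le_def
  proof (intro ballI)
    fix \<alpha> assume \<alpha>: "\<alpha> \<in> Poly_Mapping.keys (h1 * h2)"
    obtain a b where ab: "\<alpha> = a + b" "a \<in> Poly_Mapping.keys h1" "b \<in> Poly_Mapping.keys h2"
      using key[OF \<alpha>] by blast
    have da: "(\<Sum>v\<in>Poly_Mapping.keys a. Poly_Mapping.lookup a v) \<le> k1"
      using h1 ab(2) unfolding polys_def total_deg_le_def by blast
    have db: "(\<Sum>v\<in>Poly_Mapping.keys b. Poly_Mapping.lookup b v) \<le> k2"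
      using h2 ab(3) unfolding polys_def total_deg_le_def by blast
    show "(\<Sum>v\<in>Poly_Mapping.keys \<alpha>. Poly_Mapping.lookup \<alpha> v) \<le> k1 + k2"
      unfolding ab(1) deg_add using da db by linarith
  qed
  show ?thesis using iv td by (simp add: polys_def)
qed

lemma polys_add:
  assumes "h1 \<in> polys n k" "h2 \<in> polys n k" shows "h1 + h2 \<in> polys n k"
proof -
  have k: "\<alpha> \<in> Poly_Mapping.keys h1 \<or> \<alpha> \<in> Poly_Mapping.keys h2" if "\<alpha> \<in> Poly_Mapping.keys (h1 + h2)" for \<alpha>
    using subsetD[OF keys_add that] by simp
  have "in_vars n (h1 + h2)" unfolding in_vars_def
  proof (intro ballI)
    fix \<alpha> v assume a: "\<alpha> \<in> Poly_Mapping.keys (h1 + h2)" and v: "v \<in> Poly_Mapping.keys \<alpha>"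
    from k[OF a] show "v < n"
    proof
      assume "\<alpha> \<in> Poly_Mapping.keys h1" thus ?thesis using assms(1) v unfolding polys_def in_vars_def by blast
    next
      assume "\<alpha> \<in> Poly_Mapping.keys h2" thus ?thesis using assms(2) v unfolding polys_def in_vars_def by blast
    qed
  qed
  moreover have "total_deg_le k (h1 + h2)" unfolding total_deg_le_def
  proof (intro ballI)
    fix \<alpha> assume a: "\<alpha> \<in> Poly_Mapping.keys (h1 + h2)"
    from k[OF a] show "(\<Sum>v\<in>Poly_Mapping.keys \<alpha>. Poly_Mapping.lookup \<alpha> v) \<le> k"
    proof
      assume "\<alpha> \<in> Poly_Mapping.keys h1" thus ?thesis using assms(1) unfolding polys_def total_deg_le_def by blast
    next
      assume "\<alpha> \<in> Poly_Mapping.keys h2" thus ?thesis using assms(2) unfolding polys_def total_deg_le_def by blast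
    qed
  qed
  ultimately show ?thesis by (simp add: polys_def)
qed

lemma polys_zero: "0 \<in> polys n k"
  by (simp add: polys_def in_vars_def total_deg_le_def)

lemma polys_pconst:
  assumes "h \<in> polys n k" shows "pconst a * h \<in> polys n k"
proof -
  have "pconst a \<in> polys n 0" by (simp add: polys_def in_vars_def total_deg_le_def pconst_def)
  from polys_mult[OF this assms] show ?thesis by simp
qed

lemma polys_sum: "(\<And>x. x \<in> S \<Longrightarrow> f x \<in> polys n k) \<Longrightarrow> (\<Sum>x\<in>S. f x) \<in> polys n k"
  by (induction S rule: infinite_finite_induct) (auto simp: polys_zero polys_add)

lemma sum_lessThan_single: fixes i0 m :: nat and g :: "nat \<Rightarrow> rpoly" shows "i0 < m \<Longrightarrow> (\<Sum>i<m. g i * (if i = i0 then X else 0)) = g i0 * (X :: rpoly)"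
proof -
  assume "i0 < m"
  have "(\<Sum>i<m. g i * (if i = i0 then X else 0)) = (\<Sum>i<m. if i = i0 then g i0 * X else 0)"
    by (rule sum.cong) auto
  also have "\<dots> = g i0 * X" by (subst sum_single[of "{..<m}" i0]) (use \<open>i0 < m\<close> in auto)
  finally show ?thesis .
qed

lemma in_Vspace:
  assumes "i < m" "P \<in> polys n (2 * d i)" shows "g i * P \<in> Vspace n m g d"
proof -
  define r where "r = (\<lambda>i'. if i' = i then P else 0)"
  have 1: "g i * P = (\<Sum>i'<m. g i' * r i')" unfolding r_def by (rule sum_lessThan_single[OF assms(1), symmetric])
  have 2: "\<forall>i'<m. r i' \<in> polys n (2 * d i')" using assms by (auto simp: r_def polys_zero)
  show ?thesis unfolding Vspace_def mem_Collect_eq by (rule exI[of _ r]) (use 1 2 in blast)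
qed

lemma in_WSOS:
  assumes "i < m" "h \<in> polys n (d i)" shows "g i * (h * h) \<in> WSOS n m g d"
proof -
  define \<sigma> where "\<sigma> = (\<lambda>i'. if i' = i then h * h else 0)"
  have 1: "g i * (h * h) = (\<Sum>i'<m. g i' * \<sigma> i')" unfolding \<sigma>_def by (rule sum_lessThan_single[OF assms(1), symmetric])
  moreover have "\<forall>i'<m. \<sigma> i' \<in> sos n (d i')"
  proof (intro allI impI)
    fix i' assume "i' < m"
    show "\<sigma> i' \<in> sos n (d i')"
    proof (cases "i' = i")
      case True
      have e: "\<sigma> i' = sum_list (map (\<lambda>h. h * h) [h])" using True by (simp add: \<sigma>_def)
      have st: "set [h] \<subseteq> polys n (d i')" using True assms by simp
      show ?thesis unfolding sos_def mem_Collect_eq by (rule exI[of _ "[h]"]) (use e st in blast)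
    next
      case False
      have e: "\<sigma> i' = sum_list (map (\<lambda>h. h * h) [])" using False by (simp add: \<sigma>_def)
      have st: "set [] \<subseteq> polys n (d i')" by simp
      show ?thesis unfolding sos_def mem_Collect_eq by (rule exI[of _ "[]"]) (use e st in blast)
    qed
  qed
  ultimately show ?thesis unfolding WSOS_def mem_Collect_eq by (intro exI[of _ \<sigma>]) blast
qed

definition hpoly :: "(nat \<Rightarrow> nat \<Rightarrow> rpoly) \<Rightarrow> nat \<Rightarrow> nat \<Rightarrow> (nat \<Rightarrow> real) \<Rightarrow> rpoly" where
  "hpoly p Li i c = (\<Sum>j<Li. pconst (c j) * p i j)"

definition vblk :: "('U::finite \<Rightarrow> rpoly) \<Rightarrow> (nat \<Rightarrow> rpoly) \<Rightarrow> (nat \<Rightarrow> nat \<Rightarrow> rpoly) \<Rightarrow> (nat \<Rightarrow> nat) \<Rightarrow> nat \<Rightarrow> (nat \<Rightarrow> real) \<Rightarrow> real^'U" where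
  "vblk q g p L i c = (\<Sum>j<L i. \<Sum>k<L i. (c j * c k) *\<^sub>R coord q (g i * p i j * p i k))"

definition blockq :: "(nat \<Rightarrow> nat) \<Rightarrow> nat \<Rightarrow> (nat \<Rightarrow> real) \<Rightarrow> bmat \<Rightarrow> real" where
  "blockq L i c Y = (\<Sum>j<L i. \<Sum>k<L i. c j * c k * Y (i,j) (i,k))"

lemma standingD:
  assumes "standing n m g d L p q"
  shows "\<And>i. i < m \<Longrightarrow> g i \<noteq> 0" "proper_cone (Sig n m g d q)" "is_basis_V n m g d q"
    "\<And>i. i < m \<Longrightarrow> is_basis_polys n (d i) (L i) (p i)"
  using assms by (auto simp: standing_def)

lemma ggp_in_V:
  assumes st: "standing n m g d L p q" and i: "i < m" and j: "j < L i" and k: "k < L i"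
  shows "g i * p i j * p i k \<in> Vspace n m g d"
proof -
  have b: "is_basis_polys n (d i) (L i) (p i)" using standingD(4)[OF st i] .
  have "p i j * p i k \<in> polys n (d i + d i)"
    using b j k by (intro polys_mult) (auto simp: is_basis_polys_def)
  hence "p i j * p i k \<in> polys n (2 * d i)" by (simp add: mult_2)
  from in_Vspace[where g=g and d=d and n=n and i=i and m=m and P="p i j * p i k", OF i this]
  show ?thesis by (simp add: mult.assoc)
qed

lemma hpoly_polys:
  assumes st: "standing n m g d L p q" and i: "i < m"
  shows "hpoly p (L i) i c \<in> polys n (d i)"
proof -
  have b: "is_basis_polys n (d i) (L i) (p i)" using standingD(4)[OF st i] .
  show ?thesis unfolding hpoly_def
    by (intro polys_sum polys_pconst) (use b in \<open>auto simp: is_basis_polys_def\<close>)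
qed

lemma vblk_poly:
  assumes st: "standing n m g d L p q" and i: "i < m"
  shows "poly_of q (vblk q g p L i c) = g i * (hpoly p (L i) i c * hpoly p (L i) i c)"
proof -
  have bV: "is_basis_V n m g d q" using standingD(3)[OF st] .
  have "poly_of q (vblk q g p L i c) = (\<Sum>j<L i. \<Sum>k<L i. pconst (c j * c k) * (g i * p i j * p i k))"
    unfolding vblk_def poly_of_sum poly_of_scale
    by (intro sum.cong refl) (simp add: coord_eq[OF bV ggp_in_V[OF st i]])
  also have "\<dots> = (\<Sum>j<L i. \<Sum>k<L i. g i * ((pconst (c j) * p i j) * (pconst (c k) * p i k)))"
    by (intro sum.cong refl) (simp only: pconst_mult[symmetric] ac_simps)
  also have "\<dots> = g i * (hpoly p (L i) i c * hpoly p (L i) i c)"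
  proof -
    have "hpoly p (L i) i c * hpoly p (L i) i c = (\<Sum>j<L i. \<Sum>k<L i. (pconst (c j) * p i j) * (pconst (c k) * p i k))"
      by (simp only: hpoly_def sum_product)
    thus ?thesis by (simp only: sum_distrib_left)
  qed
  finally show ?thesis .
qed

lemma vblk_Sig:
  assumes st: "standing n m g d L p q" and i: "i < m"
  shows "vblk q g p L i c \<in> Sig n m g d q"
  unfolding Sig_def mem_Collect_eq vblk_poly[OF st i]
  by (rule in_WSOS[where g=g and d=d and n=n and i=i and m=m and h="hpoly p (L i) i c", OF i hpoly_polys[OF st i]])

lemma vblk_nz:
  assumes st: "standing n m g d L p q" and i: "i < m" and j0: "j0 < L i" "c j0 \<noteq> 0"
  shows "vblk q g p L i c \<noteq> 0"
proof
  assume "vblk q g p L i c = 0"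
  hence "poly_of q (vblk q g p L i c) = 0" by simp
  hence "g i * (hpoly p (L i) i c * hpoly p (L i) i c) = 0" using vblk_poly[OF st i, of c] by simp
  moreover have "g i \<noteq> 0" using standingD(1)[OF st i] .
  ultimately have h0: "hpoly p (L i) i c = 0" by simp
  have b: "is_basis_polys n (d i) (L i) (p i)" using standingD(4)[OF st i] .
  hence "\<forall>j<L i. c j = 0" using h0 unfolding is_basis_polys_def hpoly_def by blast
  thus False using j0 by simp
qed

lemma vblk_inner:
  assumes i: "i < m"
  shows "y \<bullet> vblk q g p L i c = blockq L i c (Lam m g L p q y)"
proof -
  have e: "y \<bullet> coord q (g i * p i j * p i k) = Lam m g L p q y (i,j) (i,k)" if "j < L i" "k < L i" for j k
    using i that by (simp add: Lam_def bidx_def inner_vec_def)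
  show ?thesis unfolding vblk_def blockq_def inner_sum_right inner_scaleR_right
    by (intro sum.cong refl) (simp add: e)
qed

lemma Sig_repr:
  assumes st: "standing n m g d L p q" and s: "s \<in> Sig n m g d q"
  shows "\<exists>cs. s = (\<Sum>i<m. sum_list (map (vblk q g p L i) (cs i)))"
proof -
  have bV: "is_basis_V n m g d q" using standingD(3)[OF st] .
  obtain \<sigma> where ps: "poly_of q s = (\<Sum>i<m. g i * \<sigma> i)" and sig: "\<forall>i<m. \<sigma> i \<in> sos n (d i)"
    using s unfolding Sig_def WSOS_def mem_Collect_eq by blast
  have "\<forall>i. \<exists>hs. i < m \<longrightarrow> set hs \<subseteq> polys n (d i) \<and> \<sigma> i = sum_list (map (\<lambda>h. h * h) hs)"
    using sig unfolding sos_def by blast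
  then obtain hs where hs: "\<And>i. i < m \<Longrightarrow> set (hs i) \<subseteq> polys n (d i) \<and> \<sigma> i = sum_list (map (\<lambda>h. h * h) (hs i))"
    by metis
  define cf where "cf i h = (SOME c. h = hpoly p (L i) i c)" for i h
  have cf: "hpoly p (L i) i (cf i h) = h" if i: "i < m" and h: "h \<in> polys n (d i)" for i h
  proof -
    have b: "is_basis_polys n (d i) (L i) (p i)" using standingD(4)[OF st i] .
    hence "\<exists>c. h = hpoly p (L i) i c" using h unfolding is_basis_polys_def hpoly_def by blast
    hence "h = hpoly p (L i) i (cf i h)" unfolding cf_def by (rule someI_ex)
    thus ?thesis by simp
  qed
  define cs where "cs i = map (cf i) (hs i)" for i
  have "poly_of q (\<Sum>i<m. sum_list (map (vblk q g p L i) (cs i))) =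
        (\<Sum>i<m. sum_list (map (\<lambda>c. poly_of q (vblk q g p L i c)) (cs i)))"
    by (simp add: poly_of_sum poly_of_sum_list)
  also have "\<dots> = (\<Sum>i<m. g i * \<sigma> i)"
  proof (rule sum.cong[OF refl])
    fix i assume "i \<in> {..<m}" hence i: "i < m" by simp
    have "sum_list (map (\<lambda>c. poly_of q (vblk q g p L i c)) (cs i)) =
          sum_list (map (\<lambda>h. g i * (h * h)) (hs i))"
      unfolding cs_def map_map o_def
    proof (rule arg_cong[where f = sum_list], rule map_cong[OF refl])
      fix h assume "h \<in> set (hs i)"
      hence h: "h \<in> polys n (d i)" using hs[OF i] by blast
      show "poly_of q (vblk q g p L i (cf i h)) = g i * (h * h)"
        using vblk_poly[OF st i, of "cf i h"] cf[OF i h] by simp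
    qed
    also have "\<dots> = g i * \<sigma> i" using hs[OF i] by (simp add: sum_list_const_mult)
    finally show "sum_list (map (\<lambda>c. poly_of q (vblk q g p L i c)) (cs i)) = g i * \<sigma> i" .
  qed
  finally have "poly_of q (\<Sum>i<m. sum_list (map (vblk q g p L i) (cs i))) = poly_of q s"
    using ps by simp
  hence "s = (\<Sum>i<m. sum_list (map (vblk q g p L i) (cs i)))" by (rule poly_of_inj[OF bV, symmetric])
  thus ?thesis by blast
qed

lemma Sig_inner:
  assumes st: "standing n m g d L p q" and s: "s \<in> Sig n m g d q"
  shows "\<exists>cs. \<forall>y. y \<bullet> s = (\<Sum>i<m. sum_list (map (\<lambda>c. blockq L i c (Lam m g L p q y)) (cs i)))"
proof -
  obtain cs where cs: "s = (\<Sum>i<m. sum_list (map (vblk q g p L i) (cs i)))" using Sig_repr[OF st s] by blast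
  have "y \<bullet> s = (\<Sum>i<m. sum_list (map (\<lambda>c. blockq L i c (Lam m g L p q y)) (cs i)))" for y
    unfolding cs inner_sum_right inner_sum_list_right
    by (intro sum.cong refl arg_cong[where f=sum_list] map_cong) (simp_all add: vblk_inner)
  thus ?thesis by blast
qed

lemma dual_of_blocks:
  assumes st: "standing n m g d L p q"
    and bl: "\<And>i c. i < m \<Longrightarrow> blockq L i c (Lam m g L p q y) \<ge> 0"
  shows "y \<in> dual_cone (Sig n m g d q)"
  unfolding dual_cone_def mem_Collect_eq
proof
  fix s assume s: "s \<in> Sig n m g d q"
  obtain cs where cs: "\<forall>y. y \<bullet> s = (\<Sum>i<m. sum_list (map (\<lambda>c. blockq L i c (Lam m g L p q y)) (cs i)))"
    using Sig_inner[OF st s] by blast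
  have e: "y \<bullet> s = (\<Sum>i<m. sum_list (map (\<lambda>c. blockq L i c (Lam m g L p q y)) (cs i)))"
    using cs by blast
  show "0 \<le> y \<bullet> s" unfolding e
    by (intro sum_nonneg sum_list_nonneg) (auto intro: bl)
qed

lemma zero_of_blocks:
  assumes st: "standing n m g d L p q"
    and bl: "\<And>i c. i < m \<Longrightarrow> blockq L i c (Lam m g L p q y) = 0" and s: "s \<in> Sig n m g d q"
  shows "y \<bullet> s = 0"
proof -
  obtain cs where cs: "\<forall>y. y \<bullet> s = (\<Sum>i<m. sum_list (map (\<lambda>c. blockq L i c (Lam m g L p q y)) (cs i)))"
    using Sig_inner[OF st s] by blast
  have e: "y \<bullet> s = (\<Sum>i<m. sum_list (map (\<lambda>c. blockq L i c (Lam m g L p q y)) (cs i)))"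
    using cs by blast
  show ?thesis unfolding e by (simp add: bl)
qed

lemma sum_bidx_block:
  assumes i: "i < m" and z: "\<And>i' j. i' \<noteq> i \<Longrightarrow> F (i', j) = 0"
  shows "(\<Sum>a\<in>bidx m L. F a) = (\<Sum>j<L i. F (i, j))"
proof -
  have "(\<Sum>a\<in>bidx m L. F a) = (\<Sum>a\<in>Pair i ` {..<L i}. F a)"
  proof (rule sum.mono_neutral_right)
    show "finite (bidx m L)" by (simp add: bidx_def)
    show "Pair i ` {..<L i} \<subseteq> bidx m L" using i by (auto simp: bidx_def)
    show "\<forall>a\<in>bidx m L - Pair i ` {..<L i}. F a = 0"
    proof
      fix a assume a: "a \<in> bidx m L - Pair i ` {..<L i}"
      obtain i' j where a': "a = (i', j)" by fastforce
      show "F a = 0"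
      proof (cases "i' = i")
        case True thus ?thesis using a a' by (auto simp: bidx_def)
      next
        case False thus ?thesis using z a' by simp
      qed
    qed
  qed
  also have "\<dots> = (\<Sum>j<L i. F (i, j))" by (subst sum.reindex) (auto simp: inj_on_def)
  finally show ?thesis .
qed

lemma finite_bidx[simp]: "finite (bidx m L)" by (simp add: bidx_def)

lemma sum_bidx: "(\<Sum>a\<in>bidx m L. G a) = (\<Sum>i<m. \<Sum>j<L i. G (i,j))"
  unfolding bidx_def by (subst sum.Sigma) (auto simp: split_def)

lemma card_bidx: "card (bidx m L) = (\<Sum>i<m. L i)"
  by (simp add: bidx_def card_SigmaI)

lemma blockq_qf:
  assumes i: "i < m"
  shows "blockq L i c Y = qf (bidx m L) Y (\<lambda>(i',j). if i' = i then c j else 0)"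
proof -
  let ?v = "\<lambda>(i',j). if i' = i then c j else (0::real)"
  have "qf (bidx m L) Y ?v = (\<Sum>j<L i. \<Sum>b\<in>bidx m L. ?v (i,j) * Y (i,j) b * ?v b)"
    unfolding qf_def by (rule sum_bidx_block[OF i]) simp
  also have "\<dots> = (\<Sum>j<L i. \<Sum>k<L i. ?v (i,j) * Y (i,j) (i,k) * ?v (i,k))"
    by (intro sum.cong refl sum_bidx_block[OF i]) simp
  also have "\<dots> = blockq L i c Y" by (simp add: blockq_def mult_ac)
  finally show ?thesis by simp
qed

lemma qf_blocks:
  assumes bd: "\<And>i j i' k. i \<noteq> i' \<Longrightarrow> Y (i,j) (i',k) = 0"
  shows "qf (bidx m L) Y v = (\<Sum>i<m. blockq L i (\<lambda>j. v (i,j)) Y)"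
proof -
  have "qf (bidx m L) Y v = (\<Sum>a\<in>bidx m L. \<Sum>b\<in>bidx m L. v a * Y a b * v b)" by (simp add: qf_def)
  also have "\<dots> = (\<Sum>i<m. \<Sum>j<L i. \<Sum>b\<in>bidx m L. v (i,j) * Y (i,j) b * v b)"
    by (rule sum_bidx)
  also have "\<dots> = (\<Sum>i<m. \<Sum>j<L i. \<Sum>k<L i. v (i,j) * Y (i,j) (i,k) * v (i,k))"
    by (intro sum.cong refl sum_bidx_block) (auto simp: bd)
  also have "\<dots> = (\<Sum>i<m. blockq L i (\<lambda>j. v (i,j)) Y)" by (simp add: blockq_def mult_ac)
  finally show ?thesis .
qed

lemma Lam_bd: "i \<noteq> i' \<Longrightarrow> Lam m g L p q y (i,j) (i',k) = 0"
  by (simp add: Lam_def)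

lemma Lam_supp: "supp (bidx m L) (Lam m g L p q y)"
  by (auto simp: supp_def Lam_def)

lemma Lam_tp: "tp (Lam m g L p q y) = Lam m g L p q y"
proof (intro ext)
  fix a b :: "nat \<times> nat"
  obtain i j where a: "a = (i,j)" by fastforce
  obtain i' k where b: "b = (i',k)" by fastforce
  have "g i * p i k * p i j = g i * p i j * p i k" by (simp only: ac_simps)
  hence e: "coord q (g i * p i k * p i j) = coord q (g i * p i j * p i k)" by (rule arg_cong)
  show "tp (Lam m g L p q y) a b = Lam m g L p q y a b"
    unfolding a b tp_def Lam_def by (auto simp: e)
qed

lemma axis_sum: "(\<Sum>u'\<in>UNIV. axis u (1::real) $ u' * C $ u') = C $ u"
  by (subst sum_single[of UNIV u]) (auto simp: axis_def)

lemma Lam_lin: "Lam m g L p q y a b = (\<Sum>u\<in>UNIV. y $ u * Lam m g L p q (axis u 1) a b)"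
proof -
  obtain i j where a: "a = (i,j)" by fastforce
  obtain i' k where b: "b = (i',k)" by fastforce
  let ?C = "coord q (g i * p i j * p i k)"
  let ?c = "(i,j) \<in> bidx m L \<and> (i',k) \<in> bidx m L \<and> i = i'"
  have lz: "Lam m g L p q z a b = (if ?c then (\<Sum>u\<in>UNIV. z $ u * ?C $ u) else 0)" for z
    unfolding a b Lam_def by (simp only: prod.case)
  have l1: "Lam m g L p q y a b = (if ?c then (\<Sum>u\<in>UNIV. y $ u * ?C $ u) else 0)"
    by (rule lz)
  have l2: "Lam m g L p q (axis u 1) a b = (if ?c then ?C $ u else 0)" for u
    unfolding lz by (simp only: axis_sum)
  show ?thesis
  proof (cases ?c)
    case True hence e: "?c = True" by (rule eqTrueI)
    show ?thesis unfolding l1 l2 e if_True ..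
  next
    case False hence e: "?c = False" by (simp only: simp_thms)
    show ?thesis unfolding l1 l2 e if_False by simp
  qed
qed

lemma Lam_add: "Lam m g L p q (x + w) = (\<lambda>a b. Lam m g L p q x a b + Lam m g L p q w a b)"
  by (auto simp: Lam_def fun_eq_iff sum.distrib algebra_simps)

lemma interior_dual_pos:
  assumes x: "x \<in> interior (dual_cone K)" and s: "s \<in> K" "s \<noteq> 0"
  shows "x \<bullet> s > 0"
proof -
  obtain e where e: "e > 0" "ball x e \<subseteq> dual_cone K" using x mem_interior by blast
  define y where "y = x - (e / 2 / norm s) *\<^sub>R s"
  have "dist x y < e" using e s by (simp add: y_def dist_norm)
  hence "y \<in> dual_cone K" using e by auto
  hence "0 \<le> y \<bullet> s" using s by (auto simp: dual_cone_def)
  hence "(e / 2 / norm s) * (s \<bullet> s) \<le> x \<bullet> s" by (simp add: y_def inner_diff_left)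
  moreover have "(e / 2 / norm s) * (s \<bullet> s) > 0" using e s by simp
  ultimately show ?thesis by linarith
qed

lemma Lam_pd:
  assumes st: "standing n m g d L p q" and x: "x \<in> interior (dual_cone (Sig n m g d q))"
  shows "pd (bidx m L) (Lam m g L p q x)"
  unfolding pd_def
proof (intro allI impI)
  fix v :: "nat \<times> nat \<Rightarrow> real" assume "\<exists>a\<in>bidx m L. v a \<noteq> 0"
  then obtain i0 j0 where a: "i0 < m" "j0 < L i0" "v (i0,j0) \<noteq> 0" by (auto simp: bidx_def)
  have xd: "x \<in> dual_cone (Sig n m g d q)" using x interior_subset by blast
  have nn: "blockq L i (\<lambda>j. v (i,j)) (Lam m g L p q x) \<ge> 0" if i: "i < m" for i
  proof -
    have "x \<bullet> vblk q g p L i (\<lambda>j. v (i,j)) \<ge> 0" using xd vblk_Sig[OF st i] by (auto simp: dual_cone_def)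
    thus ?thesis by (simp add: vblk_inner[OF i])
  qed
  have nz: "vblk q g p L i0 (\<lambda>j. v (i0,j)) \<noteq> 0" by (rule vblk_nz[OF st a(1) a(2)]) (simp add: a(3))
  have "x \<bullet> vblk q g p L i0 (\<lambda>j. v (i0,j)) > 0" by (rule interior_dual_pos[OF x vblk_Sig[OF st a(1)] nz])
  hence "blockq L i0 (\<lambda>j. v (i0,j)) (Lam m g L p q x) > 0" by (simp add: vblk_inner[OF a(1)])
  hence "(\<Sum>i<m. blockq L i (\<lambda>j. v (i,j)) (Lam m g L p q x)) > 0"
    using a(1) nn by (intro sum_pos2[of _ i0]) auto
  thus "qf (bidx m L) (Lam m g L p q x) v > 0" by (simp add: qf_blocks Lam_bd)
qed

lemma psd_Lam_dual:
  assumes st: "standing n m g d L p q" and ps: "psd (bidx m L) (Lam m g L p q y)"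
  shows "y \<in> dual_cone (Sig n m g d q)"
  by (rule dual_of_blocks[OF st]) (use ps in \<open>simp add: blockq_qf psd_def\<close>)

lemma Lam_inj:
  assumes st: "standing n m g d L p q" and z: "Lam m g L p q w = (\<lambda>_ _. 0)"
  shows "w = 0"
proof (rule ccontr)
  assume w: "w \<noteq> 0"
  have orth: "w \<bullet> s = 0" if "s \<in> Sig n m g d q" for s
    by (rule zero_of_blocks[OF st _ that]) (simp add: z blockq_def)
  have "interior (Sig n m g d q) \<noteq> {}" using standingD(2)[OF st] by (simp add: proper_cone_def)
  then obtain t0 where "t0 \<in> interior (Sig n m g d q)" by blast
  then obtain e where e: "e > 0" "ball t0 e \<subseteq> Sig n m g d q" using mem_interior by blast
  define t1 where "t1 = t0 + (e / 2 / norm w) *\<^sub>R w"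
  have "dist t0 t1 < e" using e w by (simp add: t1_def dist_norm)
  hence "t1 \<in> Sig n m g d q" "t0 \<in> Sig n m g d q" using e by auto
  hence "w \<bullet> t1 = 0" "w \<bullet> t0 = 0" using orth by auto
  hence "(e / 2 / norm w) * (w \<bullet> w) = 0" by (simp add: t1_def inner_add_right)
  thus False using e w by simp
qed

lemma interior_Sig_nz:
  assumes st: "standing n m g d L p q" and t: "t \<in> interior (Sig n m g d q)"
  shows "t \<noteq> 0"
proof
  assume t0: "t = 0"
  obtain e where e: "e > 0" "ball t e \<subseteq> Sig n m g d q" using t mem_interior by blast
  obtain u :: 'a where True by blast
  define w :: "real^'a" where "w = (e/2) *\<^sub>R axis u 1"
  have nw: "norm w = e/2" using e by (simp add: w_def)
  have "w \<in> Sig n m g d q" "- w \<in> Sig n m g d q" using e nw t0 by (auto simp: dist_norm)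
  hence "w \<in> Sig n m g d q \<inter> uminus ` Sig n m g d q" by (auto intro: image_eqI[of _ _ "- w"])
  hence "w = 0" using standingD(2)[OF st] by (auto simp: proper_cone_def)
  thus False using nw e by simp
qed

lemma bmat_mult_mm: "bmat_mult I A B = mm I A B"
  by (simp add: bmat_mult_def mm_def)
lemma btrace_tr: "btrace I A = tr I A"
  by (simp add: btrace_def tr_def)

lemma mm_supp_idI_eq:
  assumes sA: "supp I A" and sB: "supp I B"
    and h: "\<forall>a\<in>I. \<forall>b\<in>I. mm I A B a b = (if a = b then 1 else 0)"
  shows "mm I A B = idI I"
proof (intro ext)
  fix a b show "mm I A B a b = idI I a b"
  proof (cases "a \<in> I \<and> b \<in> I")
    case True thus ?thesis using h by (auto simp: idI_def)
  next
    case False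
    have "mm I A B a b = 0" using False sA sB by (auto simp: mm_def supp_def intro!: sum.neutral)
    thus ?thesis using False by (auto simp: idI_def)
  qed
qed

lemma binv_eq:
  fixes I :: "(nat \<times> nat) set"
  assumes I: "finite I" and Q: "orth I Q" and fpos: "\<forall>k\<in>I. f k > 0"
  shows "binv I (fm I Q f) = Bm I Q f"
  unfolding binv_def bmat_mult_mm
proof (rule the_equality)
  have xb: "mm I (fm I Q f) (Bm I Q f) = idI I" using XB[OF I Q fpos] by (simp add: Xm_def[OF I Q fpos])
  have s1: "\<forall>a b. a \<notin> I \<or> b \<notin> I \<longrightarrow> Bm I Q f a b = 0" using supB[OF I Q fpos] by (simp add: supp_def)
  have s2: "\<forall>a\<in>I. \<forall>b\<in>I. mm I (fm I Q f) (Bm I Q f) a b = (if a = b then 1 else 0)"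
  proof (intro ballI)
    fix a b assume "a \<in> I" "b \<in> I"
    thus "mm I (fm I Q f) (Bm I Q f) a b = (if a = b then 1 else 0)" unfolding xb idI_def by simp
  qed
  show "(\<forall>a b. a \<notin> I \<or> b \<notin> I \<longrightarrow> Bm I Q f a b = 0) \<and>
        (\<forall>a\<in>I. \<forall>b\<in>I. mm I (fm I Q f) (Bm I Q f) a b = (if a = b then 1 else 0))"
    using s1 s2 by blast
next
  fix B assume h: "(\<forall>a b. a \<notin> I \<or> b \<notin> I \<longrightarrow> B a b = 0) \<and>
        (\<forall>a\<in>I. \<forall>b\<in>I. mm I (fm I Q f) B a b = (if a = b then 1 else 0))"
  have sB: "supp I B" using h by (simp add: supp_def)
  have sX: "supp I (fm I Q f)" using supp_fm[OF I sQ[OF I Q fpos]] .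
  have XB': "mm I (Xm I Q f) B = idI I" unfolding Xm_def[OF I Q fpos] using mm_supp_idI_eq[OF sX sB] h by blast
  have "B = mm I (idI I) B" using mm_idI_left[OF I sB] by simp
  also have "\<dots> = mm I (mm I (Bm I Q f) (Xm I Q f)) B" using BX[OF I Q fpos] by simp
  also have "\<dots> = mm I (Bm I Q f) (idI I)" by (simp add: mm_assoc XB')
  also have "\<dots> = Bm I Q f" using mm_idI_right[OF I supB[OF I Q fpos]] .
  finally show "B = Bm I Q f" .
qed

lemma tr_lin:
  "tr I (mm I (\<lambda>a b. \<Sum>u\<in>U. w u * F u a b) M) = (\<Sum>u\<in>U. w u * tr I (mm I (F u) M))"
proof -
  have "tr I (mm I (\<lambda>a b. \<Sum>u\<in>U. w u * F u a b) M) = (\<Sum>a\<in>I. \<Sum>c\<in>I. \<Sum>u\<in>U. w u * F u a c * M c a)"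
    by (simp add: tr_def mm_def sum_distrib_right)
  also have "\<dots> = (\<Sum>a\<in>I. \<Sum>u\<in>U. \<Sum>c\<in>I. w u * F u a c * M c a)"
    by (rule sum.cong[OF refl], rule sum.swap)
  also have "\<dots> = (\<Sum>u\<in>U. \<Sum>a\<in>I. \<Sum>c\<in>I. w u * F u a c * M c a)" by (rule sum.swap)
  also have "\<dots> = (\<Sum>u\<in>U. w u * tr I (mm I (F u) M))"
    by (simp add: tr_def mm_def sum_distrib_left mult.assoc)
  finally show ?thesis .
qed

lemma cyc2: "tr I (mm I A (mm I (mm I B C) B)) = tr I (mm I C (mm I (mm I B A) B))"
proof -
  have "tr I (mm I A (mm I (mm I B C) B)) = tr I (mm I (mm I (mm I A B) C) B)" by (simp add: mm_assoc)
  also have "\<dots> = tr I (mm I B (mm I (mm I A B) C))" by (rule tr_mm_comm)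
  also have "\<dots> = tr I (mm I (mm I B (mm I A B)) C)" by (simp add: mm_assoc)
  also have "\<dots> = tr I (mm I C (mm I B (mm I A B)))" by (rule tr_mm_comm)
  also have "\<dots> = tr I (mm I C (mm I (mm I B A) B))" by (simp add: mm_assoc)
  finally show ?thesis .
qed

lemma Lam_eq_lin: "Lam m g L p q y = (\<lambda>a b. \<Sum>u\<in>UNIV. y $ u * Lam m g L p q (axis u 1) a b)"
  by (intro ext) (rule Lam_lin)

lemma Hess_entry:
  "Hess m g L p q x $ v $ u = tr (bidx m L) (mm (bidx m L) (Lam m g L p q (axis v 1))
      (mm (bidx m L) (mm (bidx m L) (binv (bidx m L) (Lam m g L p q x)) (Lam m g L p q (axis u 1)))
         (binv (bidx m L) (Lam m g L p q x))))"
  by (simp add: Hess_def Lam_adj_def Let_def bmat_mult_mm btrace_tr)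

lemma grad_entry:
  "grad m g L p q x $ v = - tr (bidx m L) (mm (bidx m L) (Lam m g L p q (axis v 1)) (binv (bidx m L) (Lam m g L p q x)))"
  by (simp add: grad_def Lam_adj_def bmat_mult_mm btrace_tr)

lemma Hess_mult:
  fixes q :: "'U::finite \<Rightarrow> rpoly" and m :: nat and L :: "nat \<Rightarrow> nat" and g :: "nat \<Rightarrow> rpoly"
    and p :: "nat \<Rightarrow> nat \<Rightarrow> rpoly" and x :: "real^'U"
  defines "I \<equiv> bidx m L" and "Bx \<equiv> binv (bidx m L) (Lam m g L p q x)"
  shows "(Hess m g L p q x *v y) $ v = tr I (mm I (Lam m g L p q (axis v 1)) (mm I (mm I Bx (Lam m g L p q y)) Bx))"
proof -
  let ?E = "\<lambda>u. Lam m g L p q (axis u 1)"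
  have e: "Hess m g L p q x $ v $ u = tr I (mm I (?E u) (mm I (mm I Bx (?E v)) Bx))" for u
    unfolding Hess_entry I_def Bx_def by (rule cyc2)
  have "(Hess m g L p q x *v y) $ v = (\<Sum>u\<in>UNIV. y $ u * tr I (mm I (?E u) (mm I (mm I Bx (?E v)) Bx)))"
    unfolding matrix_vector_mult_def by (simp add: e mult.commute)
  also have "\<dots> = tr I (mm I (Lam m g L p q y) (mm I (mm I Bx (?E v)) Bx))"
    by (subst Lam_eq_lin[of m g L p q y]) (rule tr_lin[symmetric])
  also have "\<dots> = tr I (mm I (?E v) (mm I (mm I Bx (Lam m g L p q y)) Bx))" by (rule cyc2)
  finally show ?thesis .
qed

lemma Hess_inner:
  fixes q :: "'U::finite \<Rightarrow> rpoly" and m :: nat and L :: "nat \<Rightarrow> nat" and g :: "nat \<Rightarrow> rpoly"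
    and p :: "nat \<Rightarrow> nat \<Rightarrow> rpoly" and x :: "real^'U"
  defines "I \<equiv> bidx m L" and "Bx \<equiv> binv (bidx m L) (Lam m g L p q x)"
  shows "z \<bullet> (Hess m g L p q x *v y) = tr I (mm I (Lam m g L p q z) (mm I (mm I Bx (Lam m g L p q y)) Bx))"
proof -
  have "z \<bullet> (Hess m g L p q x *v y) = (\<Sum>v\<in>UNIV. z $ v * tr I (mm I (Lam m g L p q (axis v 1)) (mm I (mm I Bx (Lam m g L p q y)) Bx)))"
    unfolding inner_vec_def Hess_mult I_def Bx_def by simp
  also have "\<dots> = tr I (mm I (Lam m g L p q z) (mm I (mm I Bx (Lam m g L p q y)) Bx))"
    by (subst Lam_eq_lin[of m g L p q z]) (rule tr_lin[symmetric])
  finally show ?thesis .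
qed

lemma Hess_sym: "transpose (Hess m g L p q x) = Hess m g L p q x"
proof -
  have "Hess m g L p q x $ u $ v = Hess m g L p q x $ v $ u" for u v
    unfolding Hess_entry by (rule cyc2)
  thus ?thesis unfolding transpose_def by (simp add: vec_eq_iff)
qed

definition hf :: "real^'n^'n \<Rightarrow> ('n \<Rightarrow> 'n \<Rightarrow> real)" where "hf A = (\<lambda>a b. A $ a $ b)"
definition hv :: "real^'n \<Rightarrow> ('n \<Rightarrow> real)" where "hv v = (\<lambda>a. v $ a)"
definition fromf :: "('n \<Rightarrow> 'n \<Rightarrow> real) \<Rightarrow> real^'n^'n" where "fromf F = (\<chi> a b. F a b)"

lemma hf_fromf[simp]: "hf (fromf F) = F" by (simp add: hf_def fromf_def)
lemma hf_inj: "hf A = hf B \<Longrightarrow> A = B"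
  by (simp add: hf_def vec_eq_iff fun_eq_iff)
lemma hf_mult: "hf (A ** B) = mm UNIV (hf A) (hf B)"
  by (simp add: hf_def mm_def matrix_matrix_mult_def)
lemma hf_transpose: "hf (transpose A) = tp (hf A)"
  by (simp add: hf_def tp_def transpose_def)
lemma hf_mat1: "hf (mat 1) = idI UNIV"
  by (simp add: hf_def idI_def mat_def fun_eq_iff)
lemma supp_UNIV[simp]: "supp UNIV A" by (simp add: supp_def)

lemma qf_hf: "qf UNIV (hf A) (hv v) = v \<bullet> (A *v v)"
  by (simp add: qf_def hf_def hv_def inner_vec_def matrix_vector_mult_def sum_distrib_left mult.assoc)

lemma norm_mv: "(norm (A *v s))\<^sup>2 = qf UNIV (mm UNIV (tp (hf A)) (hf A)) (hv s)"
proof -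
  have "(norm (A *v s))\<^sup>2 = (A *v s) \<bullet> (A *v s)" by (simp add: power2_norm_eq_inner)
  also have "\<dots> = (\<Sum>a\<in>UNIV. \<Sum>b\<in>UNIV. \<Sum>c\<in>UNIV. s $ b * A $ a $ b * A $ a $ c * s $ c)"
    by (simp add: inner_vec_def matrix_vector_mult_def sum_distrib_left sum_distrib_right mult_ac)
  also have "\<dots> = (\<Sum>b\<in>UNIV. \<Sum>a\<in>UNIV. \<Sum>c\<in>UNIV. s $ b * A $ a $ b * A $ a $ c * s $ c)"
    by (rule sum.swap)
  also have "\<dots> = (\<Sum>b\<in>UNIV. \<Sum>c\<in>UNIV. \<Sum>a\<in>UNIV. s $ b * A $ a $ b * A $ a $ c * s $ c)"
    by (rule sum.cong[OF refl], rule sum.swap)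
  also have "\<dots> = qf UNIV (mm UNIV (tp (hf A)) (hf A)) (hv s)"
    by (simp add: qf_def mm_def tp_def hf_def hv_def sum_distrib_left sum_distrib_right mult_ac)
  finally show ?thesis .
qed

lemma mv_mm: "mv I (mm I A B) v = mv I A (mv I B v)"
proof (intro ext)
  fix a
  have "mv I (mm I A B) v a = (\<Sum>b\<in>I. \<Sum>c\<in>I. A a c * B c b * v b)"
    by (simp add: mv_def mm_def sum_distrib_right)
  also have "\<dots> = (\<Sum>c\<in>I. \<Sum>b\<in>I. A a c * B c b * v b)" by (rule sum.swap)
  also have "\<dots> = mv I A (mv I B v) a" by (simp add: mv_def sum_distrib_left mult.assoc)
  finally show "mv I (mm I A B) v a = mv I A (mv I B v) a" .
qed

lemma qf_mv: "qf I A v = (\<Sum>a\<in>I. v a * mv I A v a)"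
  by (simp add: qf_def mv_def sum_distrib_left mult.assoc)

lemma mv_fm_col:
  assumes I: "finite I" and P: "orth I P" and k: "k \<in> I"
  shows "mv I (fm I P mu) (\<lambda>a. P a k) a = mu k * P a k"
proof -
  have "mv I (fm I P mu) (\<lambda>a. P a k) a = (\<Sum>b\<in>I. \<Sum>j\<in>I. P a j * mu j * P b j * P b k)"
    by (simp add: mv_def fm_eq[OF I] sum_distrib_right)
  also have "\<dots> = (\<Sum>j\<in>I. P a j * mu j * (\<Sum>b\<in>I. P b j * P b k))"
    by (subst sum.swap) (simp add: sum_distrib_left mult.assoc)
  also have "\<dots> = (\<Sum>j\<in>I. P a j * mu j * (if j = k then 1 else 0))"
    by (rule sum.cong[OF refl]) (simp add: orth_col[OF P _ k])
  also have "\<dots> = mu k * P a k" by (subst sum_single[OF I k]) auto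
  finally show ?thesis .
qed

lemma sqrt_unique:
  assumes I: "finite I" and s1: "supp I R1" and s2: "supp I R2" and t1: "tp R1 = R1" and t2: "tp R2 = R2"
    and p1: "psd I R1" and p2: "psd I R2" and eq: "mm I R1 R1 = mm I R2 R2"
  shows "R1 = R2"
proof -
  obtain P mu where P: "orth I P" and R1f: "R1 = fm I P mu" using spectral[OF I s1 t1] by blast
  have sP: "supp I P" using P by (simp add: orth_def)
  have mu0: "mu k \<ge> 0" if "k \<in> I" for k
  proof -
    have "0 \<le> qf I (fm I P mu) (\<lambda>a. P a k)" using p1 R1f by (simp add: psd_def)
    thus ?thesis using qf_col[OF I P that, of mu] by simp
  qed
  have S2: "R2 b a = R2 a b" for a b using fun_cong[OF fun_cong[OF t2], of a b] by (simp add: tp_def)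
  have col: "mv I R2 (\<lambda>a. P a k) a = mv I R1 (\<lambda>a. P a k) a" if k: "k \<in> I" and a: "a \<in> I" for k a
  proof -
    let ?c = "\<lambda>a. P a k"
    define r where "r = mv I R2 ?c"
    define u where "u = (\<lambda>a. r a - mu k * ?c a)"
    have R1c: "mv I R1 ?c = (\<lambda>a. mu k * ?c a)" using mv_fm_col[OF I P k] R1f by auto
    have lin: "mv I R2 u = (\<lambda>a. mv I R2 r a - mu k * r a)"
      by (auto simp: u_def mv_def r_def sum_subtractf sum_distrib_left algebra_simps)
    have "mv I R2 r = mv I (mm I R2 R2) ?c" by (simp add: r_def mv_mm)
    also have "\<dots> = mv I (mm I R1 R1) ?c" by (simp add: eq)
    also have "\<dots> = mv I R1 (\<lambda>a. mu k * ?c a)" by (simp only: mv_mm R1c)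
    also have "\<dots> = (\<lambda>a. mu k * mv I R1 ?c a)" by (simp add: mv_def sum_distrib_left mult_ac)
    also have "\<dots> = (\<lambda>a. mu k * (mu k * ?c a))" by (simp only: R1c)
    finally have R2r: "mv I R2 r = (\<lambda>a. mu k * (mu k * ?c a))" .
    have R2u: "mv I R2 u = (\<lambda>a. - mu k * u a)" unfolding lin R2r by (auto simp: u_def algebra_simps)
    have qu: "qf I R2 u = - mu k * (\<Sum>a\<in>I. (u a)\<^sup>2)"
      by (simp add: qf_mv R2u sum_distrib_left power2_eq_square mult_ac)
    have sq0: "(\<Sum>a\<in>I. (u a)\<^sup>2) = 0"
    proof (cases "mu k = 0")
      case False
      hence "mu k > 0" using mu0[OF k] by simp
      moreover have "qf I R2 u \<ge> 0" using p2 by (simp add: psd_def)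
      ultimately have "(\<Sum>a\<in>I. (u a)\<^sup>2) \<le> 0" using qu by (simp add: mult_le_0_iff)
      moreover have "(\<Sum>a\<in>I. (u a)\<^sup>2) \<ge> 0" by (simp add: sum_nonneg)
      ultimately show ?thesis by simp
    next
      case True
      hence ur: "u = r" by (simp add: u_def)
      have R2u0: "mv I R2 u = (\<lambda>_. 0)" using R2u True by simp
      have "(\<Sum>a\<in>I. (u a)\<^sup>2) = (\<Sum>a\<in>I. \<Sum>b\<in>I. u a * R2 a b * ?c b)"
        by (simp add: power2_eq_square ur r_def mv_def sum_distrib_left mult.assoc)
      also have "\<dots> = (\<Sum>b\<in>I. ?c b * mv I R2 u b)"
        by (subst sum.swap) (simp add: mv_def sum_distrib_left S2 mult_ac)
      also have "\<dots> = 0" by (simp add: R2u0)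
      finally show ?thesis .
    qed
    have "u a = 0" using sq0 sum_nonneg_eq_0_iff[OF I, of "\<lambda>a. (u a)\<^sup>2"] a by simp
    thus ?thesis using R1c by (simp add: u_def r_def)
  qed
  have rec: "R a b = (\<Sum>k\<in>I. mv I R (\<lambda>a. P a k) a * P b k)" if "supp I R" "b \<in> I" for R a b
  proof -
    have "(\<Sum>k\<in>I. mv I R (\<lambda>a. P a k) a * P b k) = (\<Sum>c\<in>I. R a c * (\<Sum>k\<in>I. P c k * P b k))"
      by (simp add: mv_def sum_distrib_left sum_distrib_right mult_ac) (rule sum.swap)
    also have "\<dots> = (\<Sum>c\<in>I. R a c * (if c = b then 1 else 0))"
      by (rule sum.cong[OF refl]) (simp add: orth_row[OF P _ that(2)])
    also have "\<dots> = R a b" by (subst sum_single[OF I that(2)]) auto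
    finally show ?thesis by simp
  qed
  show ?thesis
  proof (intro ext)
    fix a b show "R1 a b = R2 a b"
    proof (cases "a \<in> I \<and> b \<in> I")
      case True
      have "R1 a b = (\<Sum>k\<in>I. mv I R1 (\<lambda>a. P a k) a * P b k)" using rec[OF s1] True by blast
      also have "\<dots> = (\<Sum>k\<in>I. mv I R2 (\<lambda>a. P a k) a * P b k)"
        by (rule sum.cong[OF refl]) (use col True in auto)
      also have "\<dots> = R2 a b" using rec[OF s2] True by simp
      finally show ?thesis .
    next
      case False thus ?thesis using s1 s2 by (auto simp: supp_def)
    qed
  qed
qed

lemma hv_vec: "hv (\<chi> a. v a) = v" by (simp add: hv_def)

lemma psd_Rm: assumes I: "finite I" and Q: "orth I Q" and fpos: "\<forall>k\<in>I. f k > 0"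
  shows "psd I (Rm I Q f)"
  unfolding psd_def Rm_def[OF I Q fpos] qf_fm[OF I]
  using fpos by (auto intro!: sum_nonneg)

lemma pd_mat_props:
  fixes M :: "real^'n^'n"
  assumes sym: "transpose M = M" and pdM: "\<And>y. y \<noteq> 0 \<Longrightarrow> 0 < y \<bullet> (M *v y)"
  shows "M ** matrix_inv M = mat 1" "matrix_inv M ** M = mat 1"
    "\<And>s. (norm (psd_sqrt (matrix_inv M) *v s))\<^sup>2 = s \<bullet> (matrix_inv M *v s)"
proof -
  let ?I = "UNIV :: 'n set"
  have I: "finite ?I" by simp
  have pdf: "pd ?I (hf M)" unfolding pd_def
  proof (intro allI impI)
    fix v :: "'n \<Rightarrow> real" assume "\<exists>a\<in>?I. v a \<noteq> 0"
    hence "(\<chi> a. v a) \<noteq> 0" by (auto simp: vec_eq_iff)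
    hence "0 < (\<chi> a. v a) \<bullet> (M *v (\<chi> a. v a))" by (rule pdM)
    thus "0 < qf ?I (hf M) v" using qf_hf[of M "\<chi> a. v a"] by (simp add: hv_vec)
  qed
  have tM: "tp (hf M) = hf M" using hf_transpose[of M] sym by simp
  obtain Q f where Q: "orth ?I Q" and fpos: "\<forall>k\<in>?I. f k > 0" and Mf: "hf M = fm ?I Q f"
    using pd_factor[OF I supp_UNIV tM pdf] by blast
  have X: "Xm ?I Q f = hf M" using Xm_def[OF I Q fpos] Mf by simp
  define Mi where "Mi = fromf (Bm ?I Q f)"
  have hMi: "hf Mi = Bm ?I Q f" by (simp add: Mi_def)
  have MMi: "M ** Mi = mat 1"
    by (rule hf_inj) (simp add: hf_mult hMi hf_mat1 X[symmetric] XB[OF I Q fpos])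
  have MiM: "Mi ** M = mat 1"
    by (rule hf_inj) (simp add: hf_mult hMi hf_mat1 X[symmetric] BX[OF I Q fpos])
  have inv: "matrix_inv M = Mi" unfolding matrix_inv_def
  proof (rule some_equality)
    show "M ** Mi = mat 1 \<and> Mi ** M = mat 1" using MMi MiM by simp
  next
    fix A assume A: "M ** A = mat 1 \<and> A ** M = mat 1"
    have "A = (Mi ** M) ** A" using MiM by simp
    also have "\<dots> = Mi ** (M ** A)" by (simp add: matrix_mul_assoc)
    also have "\<dots> = Mi" using A by simp
    finally show "A = Mi" .
  qed
  show "M ** matrix_inv M = mat 1" "matrix_inv M ** M = mat 1" using MMi MiM inv by simp_all
  define Ri where "Ri = fromf (Rm ?I Q f)"
  have hRi: "hf Ri = Rm ?I Q f" by (simp add: Ri_def)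
  have sqrt: "psd_sqrt Mi = Ri" unfolding psd_sqrt_def
  proof (rule the_equality)
    have t: "transpose Ri = Ri" by (rule hf_inj) (simp add: hf_transpose hRi tpR[OF I Q fpos])
    have p: "\<forall>v. 0 \<le> v \<bullet> (Ri *v v)"
    proof
      fix v :: "real^'n"
      have "0 \<le> qf ?I (hf Ri) (hv v)" using psd_Rm[OF I Q fpos] hRi by (simp add: psd_def)
      thus "0 \<le> v \<bullet> (Ri *v v)" by (simp add: qf_hf)
    qed
    have r: "Ri ** Ri = Mi" by (rule hf_inj) (simp add: hf_mult hRi hMi RR[OF I Q fpos])
    show "transpose Ri = Ri \<and> (\<forall>v. 0 \<le> v \<bullet> (Ri *v v)) \<and> Ri ** Ri = Mi" using t p r by simp
  next
    fix R assume R: "transpose R = R \<and> (\<forall>v. 0 \<le> v \<bullet> (R *v v)) \<and> R ** R = Mi"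
    have tR: "tp (hf R) = hf R" using R hf_transpose[of R] by simp
    have pR: "psd ?I (hf R)" unfolding psd_def
    proof
      fix v :: "'n \<Rightarrow> real"
      have "0 \<le> (\<chi> a. v a) \<bullet> (R *v (\<chi> a. v a))" using R by blast
      thus "0 \<le> qf ?I (hf R) v" using qf_hf[of R "\<chi> a. v a"] by (simp add: hv_vec)
    qed
    have eqR: "mm ?I (hf R) (hf R) = mm ?I (Rm ?I Q f) (Rm ?I Q f)"
      using R by (simp add: hf_mult[symmetric] hMi RR[OF I Q fpos])
    have "hf R = Rm ?I Q f"
      by (rule sqrt_unique[OF I supp_UNIV supp_UNIV tR tpR[OF I Q fpos] pR psd_Rm[OF I Q fpos] eqR])
    thus "R = Ri" using hRi by (intro hf_inj) simp
  qed
  fix s :: "real^'n"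
  have "(norm (psd_sqrt (matrix_inv M) *v s))\<^sup>2 = qf ?I (mm ?I (tp (hf Ri)) (hf Ri)) (hv s)"
    unfolding inv sqrt by (rule norm_mv)
  also have "\<dots> = qf ?I (hf Mi) (hv s)" by (simp add: hRi tpR[OF I Q fpos] RR[OF I Q fpos] hMi)
  also have "\<dots> = s \<bullet> (matrix_inv M *v s)" by (simp add: qf_hf inv)
  finally show "(norm (psd_sqrt (matrix_inv M) *v s))\<^sup>2 = s \<bullet> (matrix_inv M *v s)" .
qed

lemma xfacts:
  assumes st: "standing n m g d L p q" and x: "x \<in> interior (dual_cone (Sig n m g d q))"
  shows "\<exists>Q f. orth (bidx m L) Q \<and> (\<forall>k\<in>bidx m L. f k > 0) \<and> Lam m g L p q x = fm (bidx m L) Q f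
    \<and> binv (bidx m L) (Lam m g L p q x) = Bm (bidx m L) Q f"
proof -
  obtain Q f where Q: "orth (bidx m L) Q" and fpos: "\<forall>k\<in>bidx m L. f k > 0"
    and X: "Lam m g L p q x = fm (bidx m L) Q f"
    using pd_factor[OF finite_bidx Lam_supp Lam_tp Lam_pd[OF st x]] by blast
  have "binv (bidx m L) (Lam m g L p q x) = Bm (bidx m L) Q f"
    unfolding X by (rule binv_eq[OF finite_bidx Q fpos])
  thus ?thesis using Q fpos X by blast
qed

lemma H_facts:
  assumes st: "standing n m g d L p q" and x: "x \<in> interior (dual_cone (Sig n m g d q))"
    and Q: "orth (bidx m L) Q" and fpos: "\<forall>k\<in>bidx m L. f k > 0"
    and X: "Lam m g L p q x = fm (bidx m L) Q f" and Bx: "binv (bidx m L) (Lam m g L p q x) = Bm (bidx m L) Q f"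
  shows "\<And>y. y \<bullet> (Hess m g L p q x *v y) = tr (bidx m L) (mm (bidx m L) (mm (bidx m L) (Bm (bidx m L) Q f) (Lam m g L p q y)) (mm (bidx m L) (Bm (bidx m L) Q f) (Lam m g L p q y)))"
    and "\<And>y. x \<bullet> (Hess m g L p q x *v y) = tr (bidx m L) (mm (bidx m L) (Bm (bidx m L) Q f) (Lam m g L p q y))"
    and "Hess m g L p q x *v x = - grad m g L p q x"
    and "\<And>y. y \<noteq> 0 \<Longrightarrow> 0 < y \<bullet> (Hess m g L p q x *v y)"
proof -
  let ?I = "bidx m L"
  let ?B = "Bm (bidx m L) Q f"
  let ?X = "Lam m g L p q x"
  have I: "finite ?I" by simp
  have XX: "?X = Xm ?I Q f" using X Xm_def[OF I Q fpos] by simp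
  have BXe: "mm ?I ?B ?X = idI ?I" unfolding XX by (rule BX[OF I Q fpos])
  have sB: "supp ?I ?B" by (rule supB[OF I Q fpos])
  have HI: "z \<bullet> (Hess m g L p q x *v y) = tr ?I (mm ?I (Lam m g L p q z) (mm ?I (mm ?I ?B (Lam m g L p q y)) ?B))" for z y
    using Hess_inner[of z m g L p q x y] unfolding Bx .
  show q: "y \<bullet> (Hess m g L p q x *v y) = tr ?I (mm ?I (mm ?I ?B (Lam m g L p q y)) (mm ?I ?B (Lam m g L p q y)))" for y
  proof -
    let ?Y = "Lam m g L p q y"
    have "y \<bullet> (Hess m g L p q x *v y) = tr ?I (mm ?I ?Y (mm ?I (mm ?I ?B ?Y) ?B))" by (rule HI)
    also have "\<dots> = tr ?I (mm ?I (mm ?I (mm ?I ?B ?Y) ?B) ?Y)" by (rule tr_mm_comm)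
    also have "\<dots> = tr ?I (mm ?I (mm ?I ?B ?Y) (mm ?I ?B ?Y))" by (simp only: mm_assoc)
    finally show ?thesis .
  qed
  show "x \<bullet> (Hess m g L p q x *v y) = tr ?I (mm ?I ?B (Lam m g L p q y))" for y
  proof -
    let ?Y = "Lam m g L p q y"
    have sY: "supp ?I ?Y" by (rule Lam_supp)
    have mid: "mm ?I (mm ?I ?B ?Y) (mm ?I ?B ?X) = mm ?I ?B ?Y"
      unfolding BXe by (rule mm_idI_right[OF I supp_mm[OF sB sY]])
    have "x \<bullet> (Hess m g L p q x *v y) = tr ?I (mm ?I ?X (mm ?I (mm ?I ?B ?Y) ?B))" by (rule HI)
    also have "\<dots> = tr ?I (mm ?I (mm ?I (mm ?I ?B ?Y) ?B) ?X)" by (rule tr_mm_comm)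
    also have "\<dots> = tr ?I (mm ?I (mm ?I ?B ?Y) (mm ?I ?B ?X))" by (simp only: mm_assoc)
    also have "\<dots> = tr ?I (mm ?I ?B ?Y)" by (simp only: mid)
    finally show ?thesis .
  qed
  have BXB: "mm ?I (mm ?I ?B ?X) ?B = ?B"
    unfolding BXe by (rule mm_idI_left[OF I sB])
  show "Hess m g L p q x *v x = - grad m g L p q x"
    unfolding vec_eq_iff
  proof
    fix v
    show "(Hess m g L p q x *v x) $ v = (- grad m g L p q x) $ v"
      unfolding Hess_mult Bx BXB by (simp add: grad_entry Bx)
  qed
  show "0 < y \<bullet> (Hess m g L p q x *v y)" if y: "y \<noteq> 0" for y
  proof -
    let ?Y = "Lam m g L p q y"
    have sY: "supp ?I ?Y" by (rule Lam_supp)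
    have tY: "tp ?Y = ?Y" by (rule Lam_tp)
    have c: "tr ?I (mm ?I (mm ?I ?B ?Y) (mm ?I ?B ?Y)) \<ge> 0"
      by (rule core3(1)[OF I Q fpos sY tY])
    have "tr ?I (mm ?I (mm ?I ?B ?Y) (mm ?I ?B ?Y)) \<noteq> 0"
    proof
      assume "tr ?I (mm ?I (mm ?I ?B ?Y) (mm ?I ?B ?Y)) = 0"
      hence "?Y = (\<lambda>_ _. 0)" by (rule core3(2)[OF I Q fpos sY tY])
      hence "y = 0" by (rule Lam_inj[OF st])
      thus False using y by simp
    qed
    hence "tr ?I (mm ?I (mm ?I ?B ?Y) (mm ?I ?B ?Y)) > 0" using c by linarith
    thus ?thesis by (simp only: q)
  qed
qed

lemma outer_mv: "outer x *v t = (x \<bullet> t) *\<^sub>R x"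
  by (simp add: outer_def matrix_vector_mult_def inner_vec_def vec_eq_iff sum_distrib_left mult_ac)

theorem lemma2:
  fixes n m :: nat and g :: "nat \<Rightarrow> rpoly" and d L :: "nat \<Rightarrow> nat"
    and p :: "nat \<Rightarrow> nat \<Rightarrow> rpoly" and q :: "'U::finite \<Rightarrow> rpoly"
  assumes "standing n m g d L p q"
  defines "\<Sigma> \<equiv> Sig n m g d q"
    and "H \<equiv> Hess m g L p q"
    and "\<nu> \<equiv> (\<Sum>i<m. L i)"
  shows "(\<forall>t x. t \<in> interior \<Sigma> \<longrightarrow> x \<in> interior (dual_cone \<Sigma>) \<longrightarrow>
            0 \<le> t \<bullet> ((outer x - (real \<nu> - 1) *\<^sub>R matrix_inv (H x)) *v t) \<longrightarrow>
            x \<in> Cert \<Sigma> H t \<and> t \<in> Pset \<Sigma> H x)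
      \<and> (\<forall>x t. x \<in> interior (dual_cone \<Sigma>) \<longrightarrow>
            dual_local_norm (H x) (t - (- grad m g L p q x)) \<le> 1 \<longrightarrow>
            matrix_inv (H x) *v t \<in> dual_cone \<Sigma>)"
proof -
  note st = assms(1)
  let ?I = "bidx m L"
  have I: "finite ?I" by simp
  have Hinv: "matrix_inv (H x) ** H x = mat 1" "H x ** matrix_inv (H x) = mat 1"
    "(norm (psd_sqrt (matrix_inv (H x)) *v s))\<^sup>2 = s \<bullet> (matrix_inv (H x) *v s)"
    if x: "x \<in> interior (dual_cone \<Sigma>)" for x s
  proof -
    have x': "x \<in> interior (dual_cone (Sig n m g d q))" using x by (simp add: \<Sigma>_def)
    obtain Q f where Q: "orth ?I Q" and fpos: "\<forall>k\<in>?I. f k > 0"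
      and X: "Lam m g L p q x = fm ?I Q f" and Bx: "binv ?I (Lam m g L p q x) = Bm ?I Q f"
      using xfacts[OF st x'] by blast
    note pm = pd_mat_props[OF Hess_sym H_facts(4)[OF st x' Q fpos X Bx]]
    show "matrix_inv (H x) ** H x = mat 1" "H x ** matrix_inv (H x) = mat 1"
      "(norm (psd_sqrt (matrix_inv (H x)) *v s))\<^sup>2 = s \<bullet> (matrix_inv (H x) *v s)"
      using pm(1,2) pm(3)[of s] unfolding H_def by simp_all
  qed
  have part1: "x \<in> Cert \<Sigma> H t \<and> t \<in> Pset \<Sigma> H x"
    if t: "t \<in> interior \<Sigma>" and x: "x \<in> interior (dual_cone \<Sigma>)"
      and c: "0 \<le> t \<bullet> ((outer x - (real \<nu> - 1) *\<^sub>R matrix_inv (H x)) *v t)" for t x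
  proof -
    have x': "x \<in> interior (dual_cone (Sig n m g d q))" using x by (simp add: \<Sigma>_def)
    obtain Q f where Q: "orth ?I Q" and fpos: "\<forall>k\<in>?I. f k > 0"
      and X: "Lam m g L p q x = fm ?I Q f" and Bx: "binv ?I (Lam m g L p q x) = Bm ?I Q f"
      using xfacts[OF st x'] by blast
    define y where "y = matrix_inv (H x) *v t"
    have Hy: "H x *v y = t" unfolding y_def by (simp add: matrix_vector_mul_assoc Hinv(2)[OF x])
    have ts: "t \<in> \<Sigma>" using t interior_subset by blast
    have t0: "t \<noteq> 0" using interior_Sig_nz[OF st] t by (simp add: \<Sigma>_def)
    have tx: "x \<bullet> t > 0" using interior_dual_pos[OF x ts t0] .
    have e1: "x \<bullet> t = tr ?I (mm ?I (Bm ?I Q f) (Lam m g L p q y))"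
      using H_facts(2)[OF st x' Q fpos X Bx, of y] Hy by (simp add: H_def)
    have "t \<bullet> (matrix_inv (H x) *v t) = y \<bullet> (H x *v y)"
      unfolding y_def[symmetric] Hy by (rule inner_commute)
    hence e2: "t \<bullet> (matrix_inv (H x) *v t) = tr ?I (mm ?I (mm ?I (Bm ?I Q f) (Lam m g L p q y)) (mm ?I (Bm ?I Q f) (Lam m g L p q y)))"
      using H_facts(1)[OF st x' Q fpos X Bx, of y] by (simp add: H_def)
    have "t \<bullet> ((outer x - (real \<nu> - 1) *\<^sub>R matrix_inv (H x)) *v t) =
          (x \<bullet> t)\<^sup>2 - (real \<nu> - 1) * (t \<bullet> (matrix_inv (H x) *v t))"
    proof -
      have "(outer x - (real \<nu> - 1) *\<^sub>R matrix_inv (H x)) *v t =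
            outer x *v t - ((real \<nu> - 1) *\<^sub>R matrix_inv (H x)) *v t"
        by (rule matrix_vector_mult_diff_rdistrib)
      also have "((real \<nu> - 1) *\<^sub>R matrix_inv (H x)) *v t = (real \<nu> - 1) *\<^sub>R (matrix_inv (H x) *v t)"
        by (rule scaleR_matrix_vector_assoc[symmetric])
      also have "outer x *v t = (x \<bullet> t) *\<^sub>R x" by (rule outer_mv)
      finally have "t \<bullet> ((outer x - (real \<nu> - 1) *\<^sub>R matrix_inv (H x)) *v t) =
          t \<bullet> ((x \<bullet> t) *\<^sub>R x - (real \<nu> - 1) *\<^sub>R (matrix_inv (H x) *v t))" by simp
      also have "\<dots> = (x \<bullet> t) * (t \<bullet> x) - (real \<nu> - 1) * (t \<bullet> (matrix_inv (H x) *v t))"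
        by (simp only: inner_diff_right inner_scaleR_right)
      also have "\<dots> = (x \<bullet> t)\<^sup>2 - (real \<nu> - 1) * (t \<bullet> (matrix_inv (H x) *v t))"
        by (simp only: inner_commute[of t x] power2_eq_square)
      finally show ?thesis .
    qed
    hence hyp: "(real (card ?I) - 1) * tr ?I (mm ?I (mm ?I (Bm ?I Q f) (Lam m g L p q y)) (mm ?I (Bm ?I Q f) (Lam m g L p q y)))
        \<le> (tr ?I (mm ?I (Bm ?I Q f) (Lam m g L p q y)))\<^sup>2"
      using c e1 e2 by (simp add: card_bidx \<nu>_def)
    have "psd ?I (Lam m g L p q y)"
      by (rule core1[OF I Q fpos Lam_supp Lam_tp]) (use tx e1 hyp in simp_all)
    hence yd: "y \<in> dual_cone \<Sigma>" unfolding \<Sigma>_def by (rule psd_Lam_dual[OF st])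
    show ?thesis using x ts yd by (simp add: Cert_def Pset_def y_def)
  qed
  have part2: "matrix_inv (H x) *v t \<in> dual_cone \<Sigma>"
    if x: "x \<in> interior (dual_cone \<Sigma>)" and nrm: "dual_local_norm (H x) (t - (- grad m g L p q x)) \<le> 1" for x t
  proof -
    have x': "x \<in> interior (dual_cone (Sig n m g d q))" using x by (simp add: \<Sigma>_def)
    obtain Q f where Q: "orth ?I Q" and fpos: "\<forall>k\<in>?I. f k > 0"
      and X: "Lam m g L p q x = fm ?I Q f" and Bx: "binv ?I (Lam m g L p q x) = Bm ?I Q f"
      using xfacts[OF st x'] by blast
    define \<delta> where "\<delta> = t - (- grad m g L p q x)"
    define Hi where "Hi = matrix_inv (H x)"
    define w where "w = Hi *v \<delta>"
    have n1: "\<delta> \<bullet> (Hi *v \<delta>) \<le> 1"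
    proof -
      have "norm (psd_sqrt Hi *v \<delta>) \<le> 1" using nrm by (simp add: dual_local_norm_def Hi_def \<delta>_def)
      hence "(norm (psd_sqrt Hi *v \<delta>))\<^sup>2 \<le> 1" by (simp add: power_le_one)
      thus ?thesis using Hinv(3)[OF x, of \<delta>] by (simp add: Hi_def)
    qed
    have Hx: "H x *v x = - grad m g L p q x" using H_facts(3)[OF st x' Q fpos X Bx] by (simp add: H_def)
    have ty: "Hi *v t = x + w"
    proof -
      have "t = \<delta> + H x *v x" by (simp add: \<delta>_def Hx)
      hence "Hi *v t = w + (Hi ** H x) *v x"
        by (simp add: w_def matrix_vector_right_distrib matrix_vector_mul_assoc)
      thus ?thesis using Hinv(1)[OF x] by (simp add: Hi_def add.commute)
    qed
    have "w \<bullet> (H x *v w) = \<delta> \<bullet> (Hi *v \<delta>)"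
      by (simp add: w_def matrix_vector_mul_assoc Hinv(2)[OF x] Hi_def inner_commute)
    hence wq: "tr ?I (mm ?I (mm ?I (Bm ?I Q f) (Lam m g L p q w)) (mm ?I (Bm ?I Q f) (Lam m g L p q w))) \<le> 1"
      using H_facts(1)[OF st x' Q fpos X Bx, of w] n1 by (simp add: H_def)
    have "psd ?I (\<lambda>a b. Xm ?I Q f a b + Lam m g L p q w a b)"
      by (rule core2[OF I Q fpos Lam_supp Lam_tp wq])
    hence "psd ?I (Lam m g L p q (x + w))"
      by (simp add: Lam_add Xm_def[OF I Q fpos] X)
    hence "x + w \<in> dual_cone \<Sigma>" unfolding \<Sigma>_def by (rule psd_Lam_dual[OF st])
    thus ?thesis using ty by (simp add: Hi_def)
  qed
  show ?thesis using part1 part2 by blast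
qed

end
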